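(* Let $\mathsf{A}\in\mathcal{O}(\Omega,\mathcal{H})$ be a POVM and $\mathcal{J}\in\mathrm{Ins}(\Lambda,\mathcal{H},\mathcal{V})$ an instrument. If $\mathsf{A}$ does not disturb $\mathcal{J}$, then $\mathsf{A}$ and $\mathcal{J}$ are compatible. Furthermore, if $\mathsf{A}$ is sharp, then the converse also holds: if $\mathsf{A}$ and $\mathcal{J}$ are compatible then $\mathsf{A}$ does not disturb $\mathcal{J}$.
   Context: All Hilbert spaces are finite-dimensional and complex, and all outcome sets are finite. A POVM $\mathsf{A}\in\mathcal{O}(\Omega,\mathcal{H})$ is a map $x\mapsto \mathsf{A}(x)$ from $\Omega$ to positive operators on $\mathcal{H}$ with $\sum_x \mathsf{A}(x)=I$; it is sharp if $\mathsf{A}(x)^2=\mathsf{A}(x)$ for all $x$. An instrument $\mathcal{I}\in\mathrm{Ins}(\Omega,\mathcal{H},\mathcal{K})$ is a family $(\mathcal{I}_x)_{x\in\Omega}$ of completely positive trace-nonincreasing linear maps $\mathcal{L}(\mathcal{H})\to\mathcal{L}(\mathcal{K})$ such that $\Phi^{\mathcal{I}}:=\sum_x\mathcal{I}_x$ is trace preserving; its induced POVM $\mathsf{A}^{\mathcal{I}}$ is defined by $\mathrm{tr}[\mathsf{A}^{\mathcal{I}}(x)\varrho]=\mathrm{tr}[\mathcal{I}_x(\varrho)]$; $\mathrm{Ins}(\Omega,\mathcal{H}):=\mathrm{Ins}(\Omega,\mathcal{H},\mathcal{H})$. An instrument $\mathcal{I}\in\mathrm{Ins}(\Omega,\mathcal{H})$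 does not disturb $\mathcal{J}\in\mathrm{Ins}(\Lambda,\mathcal{H},\mathcal{V})$ if $\mathcal{J}_y\circ\Phi^{\mathcal{I}}=\mathcal{J}_y$ for all $y\in\Lambda$. A POVM $\mathsf{A}\in\mathcal{O}(\Omega,\mathcal{H})$ does not disturb $\mathcal{J}$ if there exists $\mathcal{I}\in\mathrm{Ins}(\Omega,\mathcal{H})$ with $\mathsf{A}^{\mathcal{I}}=\mathsf{A}$ that does not disturb $\mathcal{J}$. A POVM $\mathsf{A}\in\mathcal{O}(\Omega,\mathcal{H})$ and an instrument $\mathcal{J}\in\mathrm{Ins}(\Lambda,\mathcal{H},\mathcal{V})$ are compatible if there exists $\mathcal{G}\in\mathrm{Ins}(\Omega\times\Lambda,\mathcal{H},\mathcal{V})$ with $\sum_{x}\mathcal{G}_{(x,y)}=\mathcal{J}_y$ for all $y$ and $\sum_y\mathsf{A}^{\mathcal{G}}(x,y)=\mathsf{A}(x)$ for all $x$. *)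

theory Defs
  imports "Jordan_Normal_Form.Matrix"
begin

text \<open>Operators on a Hilbert space of dimension n are complex n x n matrices
  (elements of carrier_mat n n).  Superoperators L(H) -> L(K) are HOL functions on
  matrices; only their behaviour on carrier_mat n n matters.\<close>

definition mtrace :: "complex mat \<Rightarrow> complex" where
  "mtrace A = (\<Sum>i<dim_row A. A $$ (i, i))"

definition psd :: "nat \<Rightarrow> complex mat \<Rightarrow> bool" where
  "psd n A \<longleftrightarrow> A \<in> carrier_mat n n \<and>
     (\<forall>v \<in> carrier_vec n. let q = conjugate v \<bullet> (A *\<^sub>v v) in Im q = 0 \<and> Re q \<ge> 0)"

definition msum :: "nat \<Rightarrow> nat \<Rightarrow> ('i \<Rightarrow> complex mat) \<Rightarrow> 'i set \<Rightarrow> complex mat" where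
  "msum r c f S = mat r c (\<lambda>(i, j). \<Sum>x\<in>S. f x $$ (i, j))"

definition is_povm :: "nat \<Rightarrow> ('x::finite \<Rightarrow> complex mat) \<Rightarrow> bool" where
  "is_povm n A \<longleftrightarrow> (\<forall>x. psd n (A x)) \<and> msum n n A UNIV = 1\<^sub>m n"

definition sharp :: "nat \<Rightarrow> ('x::finite \<Rightarrow> complex mat) \<Rightarrow> bool" where
  "sharp n A \<longleftrightarrow> (\<forall>x. A x * A x = A x)"

definition lin_map :: "nat \<Rightarrow> nat \<Rightarrow> (complex mat \<Rightarrow> complex mat) \<Rightarrow> bool" where
  "lin_map n k \<Phi> \<longleftrightarrow>
     (\<forall>A \<in> carrier_mat n n. \<Phi> A \<in> carrier_mat k k) \<and>
     (\<forall>A \<in> carrier_mat n n. \<forall>B \<in> carrier_mat n n. \<Phi> (A + B) = \<Phi> A + \<Phi> B) \<and>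
     (\<forall>A \<in> carrier_mat n n. \<forall>c. \<Phi> (c \<cdot>\<^sub>m A) = c \<cdot>\<^sub>m \<Phi> A)"

text \<open>The ampliation id_r (x) Phi acting on L(C^r (x) C^n) = (r*n) x (r*n) block matrices,
  applying Phi to each n x n block.\<close>
definition ampl :: "nat \<Rightarrow> nat \<Rightarrow> nat \<Rightarrow> (complex mat \<Rightarrow> complex mat) \<Rightarrow> complex mat \<Rightarrow> complex mat" where
  "ampl r n k \<Phi> X = mat (r * k) (r * k) (\<lambda>(i, j).
      \<Phi> (mat n n (\<lambda>(a, b). X $$ ((i div k) * n + a, (j div k) * n + b))) $$ (i mod k, j mod k))"

definition completely_positive :: "nat \<Rightarrow> nat \<Rightarrow> (complex mat \<Rightarrow> complex mat) \<Rightarrow> bool" where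
  "completely_positive n k \<Phi> \<longleftrightarrow>
     (\<forall>r. \<forall>X. psd (r * n) X \<longrightarrow> psd (r * k) (ampl r n k \<Phi> X))"

definition trace_nonincreasing :: "nat \<Rightarrow> (complex mat \<Rightarrow> complex mat) \<Rightarrow> bool" where
  "trace_nonincreasing n \<Phi> \<longleftrightarrow> (\<forall>\<rho>. psd n \<rho> \<longrightarrow> Re (mtrace (\<Phi> \<rho>)) \<le> Re (mtrace \<rho>))"

definition trace_preserving :: "nat \<Rightarrow> (complex mat \<Rightarrow> complex mat) \<Rightarrow> bool" where
  "trace_preserving n \<Phi> \<longleftrightarrow> (\<forall>\<rho> \<in> carrier_mat n n. mtrace (\<Phi> \<rho>) = mtrace \<rho>)"

definition chan :: "nat \<Rightarrow> ('x::finite \<Rightarrow> complex mat \<Rightarrow> complex mat) \<Rightarrow> complex mat \<Rightarrow> complex mat" where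
  "chan k I \<rho> = msum k k (\<lambda>x. I x \<rho>) UNIV"

definition is_instrument :: "nat \<Rightarrow> nat \<Rightarrow> ('x::finite \<Rightarrow> complex mat \<Rightarrow> complex mat) \<Rightarrow> bool" where
  "is_instrument n k I \<longleftrightarrow>
     (\<forall>x. lin_map n k (I x) \<and> completely_positive n k (I x) \<and> trace_nonincreasing n (I x))
     \<and> trace_preserving n (chan k I)"

definition induced_povm :: "nat \<Rightarrow> ('x::finite \<Rightarrow> complex mat \<Rightarrow> complex mat) \<Rightarrow> ('x \<Rightarrow> complex mat) \<Rightarrow> bool" where
  "induced_povm n I B \<longleftrightarrow>
     (\<forall>x. B x \<in> carrier_mat n n \<and> (\<forall>\<rho> \<in> carrier_mat n n. mtrace (B x * \<rho>) = mtrace (I x \<rho>)))"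

definition ins_not_disturb :: "nat \<Rightarrow> nat \<Rightarrow> ('x::finite \<Rightarrow> complex mat \<Rightarrow> complex mat)
     \<Rightarrow> ('y::finite \<Rightarrow> complex mat \<Rightarrow> complex mat) \<Rightarrow> bool" where
  "ins_not_disturb n d I J \<longleftrightarrow> (\<forall>y. \<forall>\<rho> \<in> carrier_mat n n. J y (chan n I \<rho>) = J y \<rho>)"

definition povm_not_disturb :: "nat \<Rightarrow> nat \<Rightarrow> ('x::finite \<Rightarrow> complex mat)
     \<Rightarrow> ('y::finite \<Rightarrow> complex mat \<Rightarrow> complex mat) \<Rightarrow> bool" where
  "povm_not_disturb n d A J \<longleftrightarrow>
     (\<exists>I :: 'x \<Rightarrow> complex mat \<Rightarrow> complex mat.
        is_instrument n n I \<and> induced_povm n I A \<and> ins_not_disturb n d I J)"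

definition compatible :: "nat \<Rightarrow> nat \<Rightarrow> ('x::finite \<Rightarrow> complex mat)
     \<Rightarrow> ('y::finite \<Rightarrow> complex mat \<Rightarrow> complex mat) \<Rightarrow> bool" where
  "compatible n d A J \<longleftrightarrow>
     (\<exists>G :: 'x \<times> 'y \<Rightarrow> complex mat \<Rightarrow> complex mat. \<exists>B :: 'x \<times> 'y \<Rightarrow> complex mat.
        is_instrument n d G \<and> induced_povm n G B \<and>
        (\<forall>y. \<forall>\<rho> \<in> carrier_mat n n. msum d d (\<lambda>x. G (x, y) \<rho>) UNIV = J y \<rho>) \<and>
        (\<forall>x. msum n n (\<lambda>y. B (x, y)) UNIV = A x))"

end

theory Submission
  imports Defs
begin

definition qf :: "nat \<Rightarrow> complex mat \<Rightarrow> (nat \<Rightarrow> complex) \<Rightarrow> (nat \<Rightarrow> complex) \<Rightarrow> complex" where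
  "qf n M f g = (\<Sum>i<n. \<Sum>j<n. cnj (f i) * M $$ (i, j) * g j)"

definition uv :: "nat \<Rightarrow> nat \<Rightarrow> complex" where
  "uv a = (\<lambda>i. if i = a then 1 else 0)"

definition herm :: "nat \<Rightarrow> complex mat \<Rightarrow> bool" where
  "herm n M \<longleftrightarrow> (\<forall>i<n. \<forall>j<n. M $$ (j, i) = cnj (M $$ (i, j)))"

definition rk :: "nat \<Rightarrow> (nat \<Rightarrow> complex) \<Rightarrow> (nat \<Rightarrow> complex) \<Rightarrow> complex mat" where
  "rk n u w = mat n n (\<lambda>(i, j). u i * cnj (w j))"

lemma mult_entry:
  assumes "A \<in> carrier_mat n m" "B \<in> carrier_mat m p" "i < n" "j < p"
  shows "(A * B) $$ (i, j) = (\<Sum>k<m. A $$ (i, k) * B $$ (k, j))"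
  using assms by (simp add: scalar_prod_def lessThan_atLeast0)

lemma mtrace_carrier: "M \<in> carrier_mat n n \<Longrightarrow> mtrace M = (\<Sum>i<n. M $$ (i, i))"
  by (simp add: mtrace_def)

lemma mtrace_comm:
  assumes "A \<in> carrier_mat n m" "B \<in> carrier_mat m n"
  shows "mtrace (A * B) = mtrace (B * A)"
proof -
  have "mtrace (A * B) = (\<Sum>i<n. \<Sum>k<m. A $$ (i, k) * B $$ (k, i))"
    unfolding mtrace_def using assms by (auto intro!: sum.cong simp: scalar_prod_def lessThan_atLeast0)
  also have "\<dots> = (\<Sum>k<m. \<Sum>i<n. B $$ (k, i) * A $$ (i, k))"
    by (subst sum.swap) (simp add: mult.commute)
  also have "\<dots> = mtrace (B * A)"
    unfolding mtrace_def using assms by (auto intro!: sum.cong simp: scalar_prod_def lessThan_atLeast0)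
  finally show ?thesis .
qed

lemma qf_vec:
  assumes "M \<in> carrier_mat n n" "v \<in> carrier_vec n"
  shows "conjugate v \<bullet> (M *\<^sub>v v) = qf n M (\<lambda>i. v $ i) (\<lambda>i. v $ i)"
  using assms by (simp add: qf_def scalar_prod_def lessThan_atLeast0 sum_distrib_left mult.assoc)

lemma psd_iff:
  "psd n M \<longleftrightarrow> M \<in> carrier_mat n n \<and> (\<forall>f. Im (qf n M f f) = 0 \<and> 0 \<le> Re (qf n M f f))"
proof
  assume p: "psd n M"
  hence M: "M \<in> carrier_mat n n" by (simp add: psd_def)
  have "Im (qf n M f f) = 0 \<and> 0 \<le> Re (qf n M f f)" for f
  proof -
    have e: "qf n M f f = qf n M (\<lambda>i. vec n f $ i) (\<lambda>i. vec n f $ i)"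
      by (simp add: qf_def)
    have "vec n f \<in> carrier_vec n" by simp
    then show ?thesis using p M qf_vec[OF M, of "vec n f"] unfolding e psd_def Let_def by metis
  qed
  thus "M \<in> carrier_mat n n \<and> (\<forall>f. Im (qf n M f f) = 0 \<and> 0 \<le> Re (qf n M f f))" using M by auto
next
  assume "M \<in> carrier_mat n n \<and> (\<forall>f. Im (qf n M f f) = 0 \<and> 0 \<le> Re (qf n M f f))"
  thus "psd n M" by (auto simp: psd_def Let_def qf_vec)
qed

lemma qf_uv: assumes "a < n" "b < n" shows "qf n M (uv a) (uv b) = M $$ (a, b)"
proof -
  have "qf n M (uv a) (uv b) = (\<Sum>i<n. \<Sum>j<n. if j = b then (if i = a then M $$ (i, j) else 0) else 0)"
    unfolding qf_def uv_def by (intro sum.cong refl) auto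
  also have "\<dots> = (\<Sum>i<n. if i = a then M $$ (i, b) else 0)"
    using assms by (intro sum.cong refl) (simp add: sum.delta)
  also have "\<dots> = M $$ (a, b)" using assms by (simp add: sum.delta)
  finally show ?thesis .
qed

lemma qf_add_left: "qf n M (\<lambda>i. f i + t * g i) h = qf n M f h + cnj t * qf n M g h"
  by (simp add: qf_def algebra_simps sum.distrib sum_distrib_left)

lemma qf_add_right: "qf n M f (\<lambda>i. g i + t * h i) = qf n M f g + t * qf n M f h"
  by (simp add: qf_def algebra_simps sum.distrib sum_distrib_left)

lemma qf_expand: "qf n M (\<lambda>i. u i + t * w i) (\<lambda>i. u i + t * w i)
   = qf n M u u + t * qf n M u w + cnj t * qf n M w u + cnj t * t * qf n M w w"
  by (simp add: qf_add_left qf_add_right algebra_simps)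

lemma real_lin_nonneg: assumes "\<forall>k::real. 0 \<le> a + k * s" shows "s = 0"
proof (rule ccontr)
  assume "s \<noteq> 0"
  have "0 \<le> a + (- (\<bar>a\<bar> + 1) / s) * s" using assms by blast
  also have "\<dots> = a - (\<bar>a\<bar> + 1)" using \<open>s \<noteq> 0\<close> by (simp add: field_simps)
  finally show False by linarith
qed

lemma cplx_lemma:
  fixes q c1 c2 :: complex
  assumes "\<forall>t. Im (q + cnj t * c1 + t * c2) = 0 \<and> 0 \<le> Re (q + cnj t * c1 + t * c2)"
  shows "c1 = 0 \<and> c2 = 0"
proof -
  have i0: "Im q = 0" using assms[rule_format, of 0] by simp
  have i1: "Im c1 + Im c2 = 0" using assms[rule_format, of 1] i0 by simp
  have i2: "Re c2 - Re c1 = 0" using assms[rule_format, of "\<i>"] i0 by simp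
  have "\<forall>k::real. 0 \<le> Re q + k * (Re c1 + Re c2)"
  proof
    fix k :: real
    show "0 \<le> Re q + k * (Re c1 + Re c2)" using assms[rule_format, of "complex_of_real k"]
      by (simp add: algebra_simps)
  qed
  hence r1: "Re c1 + Re c2 = 0" by (rule real_lin_nonneg)
  have "\<forall>k::real. 0 \<le> Re q + k * (Im c1 - Im c2)"
  proof
    fix k :: real
    show "0 \<le> Re q + k * (Im c1 - Im c2)" using assms[rule_format, of "\<i> * complex_of_real k"]
      by (simp add: algebra_simps)
  qed
  hence r2: "Im c1 - Im c2 = 0" by (rule real_lin_nonneg)
  show ?thesis using i1 i2 r1 r2 by (simp add: complex_eq_iff)
qed

lemma psd_qf_zero:
  assumes "psd n M" "qf n M w w = 0"
  shows "qf n M u w = 0 \<and> qf n M w u = 0"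
proof -
  have "\<forall>t. Im (qf n M u u + cnj t * qf n M w u + t * qf n M u w) = 0 \<and>
             0 \<le> Re (qf n M u u + cnj t * qf n M w u + t * qf n M u w)"
  proof
    fix t
    have "qf n M (\<lambda>i. u i + t * w i) (\<lambda>i. u i + t * w i) = qf n M u u + cnj t * qf n M w u + t * qf n M u w"
      using assms(2) by (simp add: qf_expand algebra_simps)
    thus "Im (qf n M u u + cnj t * qf n M w u + t * qf n M u w) = 0 \<and>
             0 \<le> Re (qf n M u u + cnj t * qf n M w u + t * qf n M u w)"
      using assms(1) unfolding psd_iff by metis
  qed
  from cplx_lemma[OF this] show ?thesis by simp
qed

lemma psd_herm: assumes "psd n M" shows "herm n M"
  unfolding herm_def
proof (intro allI impI)
  fix i j assume ij: "i < n" "j < n"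
  let ?a = "M $$ (i, j)" and ?b = "M $$ (j, i)"
  have im: "Im (qf n M f f) = 0" for f using assms psd_iff by blast
  have key: "Im (t * ?a + cnj t * ?b) = 0" for t
  proof -
    have "qf n M (\<lambda>k. uv i k + t * uv j k) (\<lambda>k. uv i k + t * uv j k)
        = M $$ (i, i) + t * ?a + cnj t * ?b + cnj t * t * M $$ (j, j)"
      using ij by (simp add: qf_expand qf_uv)
    moreover have "Im (cnj t * t * M $$ (j, j)) = 0"
    proof -
      have "Im (M $$ (j, j)) = 0" using im[of "uv j"] ij by (simp add: qf_uv)
      moreover have "cnj t * t = complex_of_real ((Re t)\<^sup>2 + (Im t)\<^sup>2)"
        by (simp add: complex_eq_iff power2_eq_square)
      ultimately show ?thesis by simp
    qed
    moreover have "Im (M $$ (i, i)) = 0" using im[of "uv i"] ij by (simp add: qf_uv)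
    moreover have "Im (M $$ (j, j)) = 0" using im[of "uv j"] ij by (simp add: qf_uv)
    ultimately show ?thesis using im[of "\<lambda>k. uv i k + t * uv j k"] by simp
  qed
  have "Im ?a + Im ?b = 0" using key[of 1] by simp
  moreover have "Re ?a - Re ?b = 0" using key[of "\<i>"] by simp
  ultimately show "?b = cnj ?a" by (simp add: complex_eq_iff)
qed

lemma psd_zero_diag:
  assumes "psd n M" "\<forall>i<n. M $$ (i, i) = 0"
  shows "M = 0\<^sub>m n n"
proof -
  have M: "M \<in> carrier_mat n n" using assms psd_def by auto
  show ?thesis
  proof (rule eq_matI)
    fix i j assume "i < dim_row (0\<^sub>m n n :: complex mat)" "j < dim_col (0\<^sub>m n n :: complex mat)"
    hence ij: "i < n" "j < n" by auto
    have "qf n M (uv j) (uv j) = 0" using ij assms(2) by (simp add: qf_uv)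
    from psd_qf_zero[OF assms(1) this, of "uv i"] ij show "M $$ (i, j) = 0\<^sub>m n n $$ (i, j)"
      by (simp add: qf_uv)
  qed (use M in auto)
qed

lemma qf_zero_mat:
  assumes "M \<in> carrier_mat n n" "\<forall>f. qf n M f f = 0"
  shows "M = 0\<^sub>m n n"
proof -
  have "psd n M" using assms by (simp add: psd_iff)
  moreover have "\<forall>i<n. M $$ (i, i) = 0" using assms(2) by (metis qf_uv)
  ultimately show ?thesis by (rule psd_zero_diag)
qed

lemma psd_diag: "psd n M \<Longrightarrow> i < n \<Longrightarrow> Im (M $$ (i, i)) = 0 \<and> 0 \<le> Re (M $$ (i, i))"
  by (metis psd_iff qf_uv)

lemma psd_trace: assumes "psd n M" shows "Im (mtrace M) = 0 \<and> 0 \<le> Re (mtrace M)"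
proof -
  have M: "M \<in> carrier_mat n n" using assms psd_def by auto
  show ?thesis using psd_diag[OF assms] by (auto simp: mtrace_carrier[OF M] intro!: sum_nonneg)
qed

lemma psd_trace_zero: assumes "psd n M" "mtrace M = 0" shows "M = 0\<^sub>m n n"
proof -
  have M: "M \<in> carrier_mat n n" using assms psd_def by auto
  have "(\<Sum>i<n. Re (M $$ (i, i))) = 0" using assms(2) mtrace_carrier[OF M]
    by (metis Re_sum zero_complex.simps(1))
  hence "\<forall>i\<in>{..<n}. Re (M $$ (i, i)) = 0"
    using psd_diag[OF assms(1)] by (subst sum_nonneg_eq_0_iff[symmetric]) auto
  hence "\<forall>i<n. M $$ (i, i) = 0" using psd_diag[OF assms(1)] by (simp add: complex_eq_iff)
  thus ?thesis using psd_zero_diag[OF assms(1)] by blast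
qed

definition Em :: "nat \<Rightarrow> nat \<Rightarrow> nat \<Rightarrow> complex mat" where
  "Em n a b = rk n (uv a) (uv b)"

lemma Em_carrier[simp]: "Em n a b \<in> carrier_mat n n"
  and Em_dims[simp]: "dim_row (Em n a b) = n" "dim_col (Em n a b) = n"
  by (simp_all add: Em_def rk_def)

lemma Em_index: "i < n \<Longrightarrow> j < n \<Longrightarrow> Em n a b $$ (i, j) = (if i = a \<and> j = b then 1 else 0)"
  by (simp add: Em_def rk_def uv_def)

lemma rk_carrier[simp]: "rk n u w \<in> carrier_mat n n"
  and rk_dims[simp]: "dim_row (rk n u w) = n" "dim_col (rk n u w) = n"
  by (simp_all add: rk_def)

lemma basis_functional:
  fixes \<psi> :: "complex mat \<Rightarrow> complex"
  assumes add: "\<forall>A\<in>carrier_mat n n. \<forall>B\<in>carrier_mat n n. \<psi> (A + B) = \<psi> A + \<psi> B"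
    and sc: "\<forall>A\<in>carrier_mat n n. \<forall>c. \<psi> (c \<cdot>\<^sub>m A) = c * \<psi> A"
    and bas: "\<forall>a<n. \<forall>b<n. \<psi> (Em n a b) = 0"
    and rho: "\<rho> \<in> carrier_mat n n"
  shows "\<psi> \<rho> = 0"
proof -
  define MS where "MS S = mat n n (\<lambda>(i, j). if (i, j) \<in> S then \<rho> $$ (i, j) else 0)" for S
  have MSc: "MS S \<in> carrier_mat n n" for S by (simp add: MS_def)
  have "finite S \<Longrightarrow> S \<subseteq> {..<n} \<times> {..<n} \<Longrightarrow> \<psi> (MS S) = 0" for S
  proof (induction S rule: finite_induct)
    case empty
    have e: "MS {} = 0 \<cdot>\<^sub>m (0\<^sub>m n n)" by (auto simp: MS_def)
    have "\<psi> (0 \<cdot>\<^sub>m (0\<^sub>m n n)) = 0 * \<psi> (0\<^sub>m n n)" using sc zero_carrier_mat by blast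
    thus ?case unfolding e by simp
  next
    case (insert p S)
    obtain a b where p: "p = (a, b)" by force
    have ab: "a < n" "b < n" using insert p by auto
    have "MS (insert p S) = MS S + \<rho> $$ (a, b) \<cdot>\<^sub>m Em n a b"
      by (rule eq_matI) (use insert p in \<open>auto simp: MS_def Em_index\<close>)
    hence "\<psi> (MS (insert p S)) = \<psi> (MS S) + \<rho> $$ (a, b) * \<psi> (Em n a b)"
      using add sc MSc by simp
    thus ?case using insert bas ab by simp
  qed
  moreover have "MS ({..<n} \<times> {..<n}) = \<rho>"
    by (rule eq_matI) (use rho in \<open>auto simp: MS_def\<close>)
  ultimately show ?thesis by (metis finite_SigmaI finite_lessThan order_refl)
qed

lemma lin_mapD:
  assumes "lin_map n k \<Phi>"
  shows "\<And>A. A \<in> carrier_mat n n \<Longrightarrow> \<Phi> A \<in> carrier_mat k k"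
    and "\<And>A B. A \<in> carrier_mat n n \<Longrightarrow> B \<in> carrier_mat n n \<Longrightarrow> \<Phi> (A + B) = \<Phi> A + \<Phi> B"
    and "\<And>A c. A \<in> carrier_mat n n \<Longrightarrow> \<Phi> (c \<cdot>\<^sub>m A) = c \<cdot>\<^sub>m \<Phi> A"
  using assms unfolding lin_map_def by auto

lemma lin_map_zero: assumes "lin_map n k \<Phi>" shows "\<Phi> (0\<^sub>m n n) = 0\<^sub>m k k"
proof -
  have "\<Phi> (0\<^sub>m n n) = \<Phi> (0 \<cdot>\<^sub>m 0\<^sub>m n n)" by (metis smult_zero_mat zero_carrier_mat)
  also have "\<dots> = 0 \<cdot>\<^sub>m \<Phi> (0\<^sub>m n n)" using lin_mapD(3)[OF assms] zero_carrier_mat by blast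
  also have "\<dots> = 0\<^sub>m k k" using lin_mapD(1)[OF assms, of "0\<^sub>m n n"] by auto
  finally show ?thesis .
qed

lemma basis_matrix:
  assumes add: "\<forall>A\<in>carrier_mat n n. \<forall>B\<in>carrier_mat n n. \<Psi> (A + B) = \<Psi> A + \<Psi> B"
    and sc: "\<forall>A\<in>carrier_mat n n. \<forall>c. \<Psi> (c \<cdot>\<^sub>m A) = c \<cdot>\<^sub>m \<Psi> A"
    and car: "\<forall>A\<in>carrier_mat n n. \<Psi> A \<in> carrier_mat k k"
    and bas: "\<forall>a<n. \<forall>b<n. \<Psi> (Em n a b) = 0\<^sub>m k k"
    and rho: "\<rho> \<in> carrier_mat n n"
  shows "\<Psi> \<rho> = 0\<^sub>m k k"
proof (rule eq_matI)
  fix i j assume "i < dim_row (0\<^sub>m k k :: complex mat)" "j < dim_col (0\<^sub>m k k :: complex mat)"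
  hence ij: "i < k" "j < k" by auto
  have f1: "\<forall>A\<in>carrier_mat n n. \<forall>B\<in>carrier_mat n n. \<Psi> (A + B) $$ (i, j) = \<Psi> A $$ (i, j) + \<Psi> B $$ (i, j)"
      using add car ij by auto
  have f2: "\<forall>A\<in>carrier_mat n n. \<forall>c. \<Psi> (c \<cdot>\<^sub>m A) $$ (i, j) = c * \<Psi> A $$ (i, j)"
      using sc car ij by auto
  have f3: "\<forall>a<n. \<forall>b<n. \<Psi> (Em n a b) $$ (i, j) = 0" using bas ij by auto
  have "\<Psi> \<rho> $$ (i, j) = 0"
    using basis_functional[where \<psi>="\<lambda>A. \<Psi> A $$ (i, j)", OF f1 f2 f3 rho] by simp
  thus "\<Psi> \<rho> $$ (i, j) = 0\<^sub>m k k $$ (i, j)" using ij by simp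
qed (use car rho in auto)

lemma trace_Em: assumes "X \<in> carrier_mat n n" "a < n" "b < n"
  shows "mtrace (X * Em n a b) = X $$ (b, a)"
proof -
  have "mtrace (X * Em n a b) = (\<Sum>i<n. \<Sum>k<n. X $$ (i, k) * Em n a b $$ (k, i))"
    using assms by (auto simp: mtrace_def scalar_prod_def lessThan_atLeast0 intro!: sum.cong)
  also have "\<dots> = (\<Sum>i<n. \<Sum>k<n. if k = a then (if i = b then X $$ (i, k) else 0) else 0)"
    by (intro sum.cong refl) (auto simp: Em_index)
  also have "\<dots> = X $$ (b, a)" using assms by (simp add: sum.delta)
  finally show ?thesis .
qed

lemma trace_pairing_eq:
  assumes "X \<in> carrier_mat n n" "Y \<in> carrier_mat n n"
    and "\<forall>\<rho>\<in>carrier_mat n n. mtrace (X * \<rho>) = mtrace (Y * \<rho>)"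
  shows "X = Y"
proof (rule eq_matI)
  fix i j assume "i < dim_row Y" "j < dim_col Y"
  hence ij: "i < n" "j < n" using assms by auto
  have "mtrace (X * Em n j i) = mtrace (Y * Em n j i)" using assms(3) by simp
  thus "X $$ (i, j) = Y $$ (i, j)" using trace_Em assms ij by metis
qed (use assms in auto)

lemma mtrace_add: "A \<in> carrier_mat n n \<Longrightarrow> B \<in> carrier_mat n n \<Longrightarrow> mtrace (A + B) = mtrace A + mtrace B"
  by (simp add: mtrace_def sum.distrib)

lemma mtrace_smult: "A \<in> carrier_mat n n \<Longrightarrow> mtrace (c \<cdot>\<^sub>m A) = c * mtrace A"
  unfolding mtrace_def by (auto simp: sum_distrib_left intro!: sum.cong)

lemma trace_repr:
  assumes "lin_map n k \<Phi>"
  shows "\<exists>B\<in>carrier_mat n n. \<forall>\<rho>\<in>carrier_mat n n. mtrace (B * \<rho>) = mtrace (\<Phi> \<rho>)"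
proof -
  define B where "B = mat n n (\<lambda>(i, j). mtrace (\<Phi> (Em n j i)))"
  have Bc: "B \<in> carrier_mat n n" by (simp add: B_def)
  have "mtrace (B * \<rho>) - mtrace (\<Phi> \<rho>) = 0" if r: "\<rho> \<in> carrier_mat n n" for \<rho>
  proof -
    have f1: "\<forall>A\<in>carrier_mat n n. \<forall>C\<in>carrier_mat n n. mtrace (B * (A + C)) - mtrace (\<Phi> (A + C)) =
        mtrace (B * A) - mtrace (\<Phi> A) + (mtrace (B * C) - mtrace (\<Phi> C))"
      using Bc lin_mapD[OF assms] by (simp add: mult_add_distrib_mat mtrace_add[where n=n] mtrace_add[where n=k])
    have f2: "\<forall>A\<in>carrier_mat n n. \<forall>c. mtrace (B * (c \<cdot>\<^sub>m A)) - mtrace (\<Phi> (c \<cdot>\<^sub>m A)) =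
        c * (mtrace (B * A) - mtrace (\<Phi> A))"
      using Bc lin_mapD[OF assms] by (simp add: mult_smult_distrib mtrace_smult[where n=n] mtrace_smult[where n=k] algebra_simps)
    have f3: "\<forall>a<n. \<forall>b<n. mtrace (B * Em n a b) - mtrace (\<Phi> (Em n a b)) = 0"
      using Bc by (simp add: trace_Em B_def)
    show ?thesis using basis_functional[where \<psi>="\<lambda>\<rho>. mtrace (B * \<rho>) - mtrace (\<Phi> \<rho>)", OF f1 f2 f3 r] by simp
  qed
  thus ?thesis using Bc by auto
qed

lemma msum_carrier[simp]: "msum r c f S \<in> carrier_mat r c"
  and msum_dims[simp]: "dim_row (msum r c f S) = r" "dim_col (msum r c f S) = c"
  by (simp_all add: msum_def)

lemma msum_empty: "msum r c f {} = 0\<^sub>m r c"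
  by (auto simp: msum_def)

lemma msum_insert:
  assumes "finite S" "a \<notin> S" "f a \<in> carrier_mat r c"
  shows "msum r c f (insert a S) = f a + msum r c f S"
  by (rule eq_matI) (use assms in \<open>auto simp: msum_def\<close>)

lemma mtrace_msum:
  assumes "\<forall>s\<in>S. f s \<in> carrier_mat k k"
  shows "mtrace (msum k k f S) = (\<Sum>s\<in>S. mtrace (f s))"
proof -
  have "mtrace (msum k k f S) = (\<Sum>i<k. \<Sum>s\<in>S. f s $$ (i, i))"
    by (simp add: mtrace_def msum_def)
  also have "\<dots> = (\<Sum>s\<in>S. \<Sum>i<k. f s $$ (i, i))" by (rule sum.swap)
  also have "\<dots> = (\<Sum>s\<in>S. mtrace (f s))"
  proof (intro sum.cong refl)
    fix s assume "s \<in> S"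
    hence "dim_row (f s) = k" using assms by auto
    thus "(\<Sum>i<k. f s $$ (i, i)) = mtrace (f s)" by (simp add: mtrace_def)
  qed
  finally show ?thesis .
qed

lemma msum_cong: "(\<And>s. s \<in> S \<Longrightarrow> f s = g s) \<Longrightarrow> msum r c f S = msum r c g S"
  unfolding msum_def by (intro arg_cong[where f="mat r c"] ext) (auto intro!: sum.cong)

lemma lin_map_msum:
  assumes "lin_map n k \<Phi>" "finite S" "\<forall>s\<in>S. f s \<in> carrier_mat n n"
  shows "\<Phi> (msum n n f S) = msum k k (\<lambda>s. \<Phi> (f s)) S"
  using assms(2,3)
proof (induction S rule: finite_induct)
  case empty
  then show ?case by (simp add: msum_empty lin_map_zero[OF assms(1)])
next
  case (insert a S)
  have "\<Phi> (msum n n f (insert a S)) = \<Phi> (f a + msum n n f S)"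
    using insert by (simp add: msum_insert)
  also have "\<dots> = \<Phi> (f a) + \<Phi> (msum n n f S)"
    using insert lin_mapD(2)[OF assms(1)] by simp
  also have "\<dots> = msum k k (\<lambda>s. \<Phi> (f s)) (insert a S)"
    using insert lin_mapD(1)[OF assms(1)] by (simp add: msum_insert)
  finally show ?case .
qed

lemma mult_msum:
  assumes "C \<in> carrier_mat m n" "D \<in> carrier_mat n p" "finite S" "\<forall>s\<in>S. f s \<in> carrier_mat n n"
  shows "C * msum n n f S * D = msum m p (\<lambda>s. C * f s * D) S"
  using assms(3,4)
proof (induction S rule: finite_induct)
  case empty
  then show ?case using assms(1,2) by (simp add: msum_empty)
next
  case (insert a S)
  have "C * msum n n f (insert a S) * D = C * (f a + msum n n f S) * D"
    using insert by (simp add: msum_insert)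
  also have "\<dots> = C * f a * D + C * msum n n f S * D"
    using insert assms(1,2)
    by (simp add: mult_add_distrib_mat[where nr=m and n=n and nc=n] add_mult_distrib_mat[where nr=m and n=n and nc=p])
  also have "\<dots> = msum m p (\<lambda>s. C * f s * D) (insert a S)"
  proof -
    have "C * f a * D \<in> carrier_mat m p" using insert assms(1,2) by auto
    thus ?thesis using insert by (simp add: msum_insert)
  qed
  finally show ?case .
qed

lemma msum_mult_trace:
  assumes "\<rho> \<in> carrier_mat n n" "finite S" "\<forall>s\<in>S. f s \<in> carrier_mat n n"
  shows "mtrace (msum n n f S * \<rho>) = (\<Sum>s\<in>S. mtrace (f s * \<rho>))"
proof -
  have "msum n n f S * \<rho> = 1\<^sub>m n * msum n n f S * \<rho>" by simp
  also have "\<dots> = msum n n (\<lambda>s. 1\<^sub>m n * f s * \<rho>) S"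
    using assms by (intro mult_msum) auto
  also have "\<dots> = msum n n (\<lambda>s. f s * \<rho>) S"
    using assms by (intro msum_cong) auto
  moreover have "\<forall>s\<in>S. f s * \<rho> \<in> carrier_mat n n" using assms by auto
  ultimately show ?thesis using mtrace_msum[where k=n and f="\<lambda>s. f s * \<rho>"] by simp
qed

lemma divmod_blk: "a < (n::nat) \<Longrightarrow> (p * n + a) div n = p \<and> (p * n + a) mod n = a"
  by auto

lemma blk_bound: "p < (r::nat) \<Longrightarrow> a < n \<Longrightarrow> p * n + a < r * n"
proof -
  assume "p < r" "a < n"
  hence "p * n + a < p * n + n" by simp
  also have "\<dots> = Suc p * n" by simp
  also have "\<dots> \<le> r * n" using \<open>p < r\<close> by (intro mult_le_mono1) simp
  finally show ?thesis .
qed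

lemma div_bound: "i < r * (d::nat) \<Longrightarrow> i div d < r"
  by (simp add: less_mult_imp_div_less)

lemma ampl_dims[simp]: "dim_row (ampl r n k \<Phi> X) = r * k" "dim_col (ampl r n k \<Phi> X) = r * k"
  "ampl r n k \<Phi> X \<in> carrier_mat (r * k) (r * k)"
  by (simp_all add: ampl_def)

lemma ampl_one:
  assumes "\<rho> \<in> carrier_mat n n" "\<Phi> \<rho> \<in> carrier_mat k k"
  shows "ampl 1 n k \<Phi> \<rho> = \<Phi> \<rho>"
proof -
  have e: "mat n n (($$) \<rho>) = \<rho>" using assms(1) by (intro eq_matI) auto
  show ?thesis
    by (rule eq_matI) (use assms in \<open>auto simp: ampl_def e\<close>)
qed

lemma cp_pos:
  assumes "completely_positive n k \<Phi>" "lin_map n k \<Phi>" "psd n \<rho>"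
  shows "psd k (\<Phi> \<rho>)"
proof -
  have r: "\<rho> \<in> carrier_mat n n" using assms(3) psd_def by auto
  have "psd (1 * n) \<rho>" using assms(3) by simp
  hence "psd (1 * k) (ampl 1 n k \<Phi> \<rho>)" using assms(1) unfolding completely_positive_def by blast
  thus ?thesis using ampl_one[where \<Phi>=\<Phi>, OF r lin_mapD(1)[OF assms(2) r]] by (metis mult_1)
qed

lemma ampl_comp:
  assumes "lin_map n n I"
  shows "ampl r n d (\<lambda>\<rho>. J (I \<rho>)) X = ampl r n d J (ampl r n n I X)"
proof (rule eq_matI)
  fix i j assume "i < dim_row (ampl r n d J (ampl r n n I X))" "j < dim_col (ampl r n d J (ampl r n n I X))"
  hence ij: "i < r * d" "j < r * d" by simp_all
  hence pq: "i div d < r" "j div d < r" by (simp_all add: div_bound)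
  define blkX where "blkX = mat n n (\<lambda>(a, b). X $$ ((i div d) * n + a, (j div d) * n + b))"
  have bc: "blkX \<in> carrier_mat n n" by (simp add: blkX_def)
  have blk: "mat n n (\<lambda>(a, b). ampl r n n I X $$ ((i div d) * n + a, (j div d) * n + b)) = I blkX"
  proof (rule eq_matI)
    fix a b assume "a < dim_row (I blkX)" "b < dim_col (I blkX)"
    hence ab: "a < n" "b < n" using lin_mapD(1)[OF assms bc] by auto
    have lt: "(i div d) * n + a < r * n" "(j div d) * n + b < r * n" using pq ab by (simp_all add: blk_bound)
    show "mat n n (\<lambda>(a, b). ampl r n n I X $$ ((i div d) * n + a, (j div d) * n + b)) $$ (a, b) = I blkX $$ (a, b)"
      using ab lt by (simp add: ampl_def divmod_blk blkX_def)
  qed (use lin_mapD(1)[OF assms bc] in auto)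
  show "ampl r n d (\<lambda>\<rho>. J (I \<rho>)) X $$ (i, j) = ampl r n d J (ampl r n n I X) $$ (i, j)"
    using ij by (simp add: ampl_def[of r n d J "ampl r n n I X"] ampl_def[of r n d "\<lambda>\<rho>. J (I \<rho>)" X] blk[unfolded blkX_def] blkX_def)
qed simp_all

lemma lin_map_comp:
  assumes "lin_map n m I" "lin_map m k J"
  shows "lin_map n k (\<lambda>\<rho>. J (I \<rho>))"
  using lin_mapD[OF assms(1)] lin_mapD[OF assms(2)] unfolding lin_map_def by auto

lemma instrD:
  assumes "is_instrument n k I"
  shows "lin_map n k (I x)" "completely_positive n k (I x)" "trace_nonincreasing n (I x)"
    "trace_preserving n (chan k I)"
  using assms unfolding is_instrument_def by auto

lemma chan_trace:
  assumes "is_instrument n k I" "\<rho> \<in> carrier_mat n n"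
  shows "(\<Sum>x\<in>UNIV. mtrace (I x \<rho>)) = mtrace \<rho>"
proof -
  have "mtrace (chan k I \<rho>) = (\<Sum>x\<in>UNIV. mtrace (I x \<rho>))"
    unfolding chan_def using lin_mapD(1)[OF instrD(1)[OF assms(1)] assms(2)]
    by (intro mtrace_msum) auto
  moreover have "mtrace (chan k I \<rho>) = mtrace \<rho>"
    using instrD(4)[OF assms(1)] assms(2) unfolding trace_preserving_def by auto
  ultimately show ?thesis by simp
qed

lemma part1:
  fixes A :: "'x::finite \<Rightarrow> complex mat" and J :: "'y::finite \<Rightarrow> complex mat \<Rightarrow> complex mat"
  assumes J: "is_instrument n d J" and nd: "povm_not_disturb n d A J"
  shows "compatible n d A J"
proof -
  obtain I :: "'x \<Rightarrow> complex mat \<Rightarrow> complex mat" where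
    I: "is_instrument n n I" and IA: "induced_povm n I A" and IJ: "ins_not_disturb n d I J"
    using nd unfolding povm_not_disturb_def by blast
  define G :: "'x \<times> 'y \<Rightarrow> complex mat \<Rightarrow> complex mat" where "G = (\<lambda>(x, y) \<rho>. J y (I x \<rho>))"
  have Gxy: "G (x, y) = (\<lambda>\<rho>. J y (I x \<rho>))" for x y by (simp add: G_def)
  have IL: "lin_map n n (I x)" for x using instrD(1)[OF I] .
  have JL: "lin_map n d (J y)" for y using instrD(1)[OF J] .
  have GL: "lin_map n d (G p)" for p
    by (cases p) (simp add: Gxy lin_map_comp[OF IL JL])
  have Ic: "I x \<rho> \<in> carrier_mat n n" if "\<rho> \<in> carrier_mat n n" for x \<rho> using lin_mapD(1)[OF IL that] .
  have Jc: "J y \<rho> \<in> carrier_mat d d" if "\<rho> \<in> carrier_mat n n" for y \<rho> using lin_mapD(1)[OF JL that] .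
  have Ipos: "psd n (I x \<rho>)" if "psd n \<rho>" for x \<rho> using cp_pos[OF instrD(2)[OF I] IL that] .
  define B :: "'x \<times> 'y \<Rightarrow> complex mat" where
    "B p = (SOME B. B \<in> carrier_mat n n \<and> (\<forall>\<rho>\<in>carrier_mat n n. mtrace (B * \<rho>) = mtrace (G p \<rho>)))" for p
  have B: "B p \<in> carrier_mat n n \<and> (\<forall>\<rho>\<in>carrier_mat n n. mtrace (B p * \<rho>) = mtrace (G p \<rho>))" for p
    unfolding B_def using trace_repr[OF GL[of p]] by (rule someI_ex[OF bexE]) blast
  have inst: "is_instrument n d G"
    unfolding is_instrument_def
  proof (intro conjI allI)
    fix p :: "'x \<times> 'y"
    obtain x y where p: "p = (x, y)" by force
    show "lin_map n d (G p)" by (rule GL)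
    show "completely_positive n d (G p)"
      unfolding completely_positive_def p Gxy
    proof (intro allI impI)
      fix r X assume "psd (r * n) X"
      hence "psd (r * n) (ampl r n n (I x) X)" using instrD(2)[OF I] unfolding completely_positive_def by blast
      hence "psd (r * d) (ampl r n d (J y) (ampl r n n (I x) X))" using instrD(2)[OF J] unfolding completely_positive_def by blast
      thus "psd (r * d) (ampl r n d (\<lambda>\<rho>. J y (I x \<rho>)) X)" by (simp add: ampl_comp[OF IL])
    qed
    show "trace_nonincreasing n (G p)"
      unfolding trace_nonincreasing_def p Gxy
    proof (intro allI impI)
      fix \<rho> assume r: "psd n \<rho>"
      have "Re (mtrace (J y (I x \<rho>))) \<le> Re (mtrace (I x \<rho>))"
        using instrD(3)[OF J] Ipos[OF r] unfolding trace_nonincreasing_def by blast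
      also have "\<dots> \<le> Re (mtrace \<rho>)" using instrD(3)[OF I] r unfolding trace_nonincreasing_def by blast
      finally show "Re (mtrace (J y (I x \<rho>))) \<le> Re (mtrace \<rho>)" .
    qed
  next
    show "trace_preserving n (chan d G)"
      unfolding trace_preserving_def
    proof
      fix \<rho> :: "complex mat" assume r: "\<rho> \<in> carrier_mat n n"
      have "mtrace (chan d G \<rho>) = (\<Sum>p\<in>UNIV. mtrace (G p \<rho>))"
        unfolding chan_def using lin_mapD(1)[OF GL r] by (intro mtrace_msum) auto
      also have "\<dots> = (\<Sum>x\<in>UNIV. \<Sum>y\<in>UNIV. mtrace (J y (I x \<rho>)))"
        using sum.cartesian_product[of "\<lambda>x y. mtrace (G (x, y) \<rho>)" UNIV UNIV]
        by (simp add: G_def case_prod_beta')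
      also have "\<dots> = (\<Sum>x\<in>UNIV. mtrace (I x \<rho>))"
        using chan_trace[OF J Ic[OF r]] by simp
      also have "\<dots> = mtrace \<rho>" using chan_trace[OF I r] .
      finally show "mtrace (chan d G \<rho>) = mtrace \<rho>" .
    qed
  qed
  have ind: "induced_povm n G B" unfolding induced_povm_def using B by blast
  have m1: "msum d d (\<lambda>x. G (x, y) \<rho>) UNIV = J y \<rho>" if r: "\<rho> \<in> carrier_mat n n" for y \<rho>
  proof -
    have "msum d d (\<lambda>x. G (x, y) \<rho>) UNIV = J y (msum n n (\<lambda>x. I x \<rho>) UNIV)"
      using lin_map_msum[OF JL, of UNIV "\<lambda>x. I x \<rho>"] Ic[OF r] by (simp add: Gxy)
    also have "\<dots> = J y (chan n I \<rho>)" by (simp add: chan_def)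
    also have "\<dots> = J y \<rho>" using IJ r unfolding ins_not_disturb_def by blast
    finally show ?thesis .
  qed
  have m2: "msum n n (\<lambda>y. B (x, y)) UNIV = A x" for x
  proof (rule trace_pairing_eq[where n = n])
    show "A x \<in> carrier_mat n n" using IA unfolding induced_povm_def by blast
    show "\<forall>\<rho>\<in>carrier_mat n n. mtrace (msum n n (\<lambda>y. B (x, y)) UNIV * \<rho>) = mtrace (A x * \<rho>)"
    proof
      fix \<rho> :: "complex mat" assume r: "\<rho> \<in> carrier_mat n n"
      have "mtrace (msum n n (\<lambda>y. B (x, y)) UNIV * \<rho>) = (\<Sum>y\<in>UNIV. mtrace (B (x, y) * \<rho>))"
        using B r by (intro msum_mult_trace) auto
      also have "\<dots> = (\<Sum>y\<in>UNIV. mtrace (J y (I x \<rho>)))"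
        using B r by (simp add: Gxy)
      also have "\<dots> = mtrace (I x \<rho>)" using chan_trace[OF J Ic[OF r]] .
      also have "\<dots> = mtrace (A x * \<rho>)" using IA r unfolding induced_povm_def by simp
      finally show "mtrace (msum n n (\<lambda>y. B (x, y)) UNIV * \<rho>) = mtrace (A x * \<rho>)" .
    qed
  qed simp
  show ?thesis unfolding compatible_def using inst ind m1 m2 by blast
qed

definition mv :: "nat \<Rightarrow> complex mat \<Rightarrow> (nat \<Rightarrow> complex) \<Rightarrow> nat \<Rightarrow> complex" where
  "mv m C g = (\<lambda>k. \<Sum>j<m. C $$ (k, j) * g j)"

lemma qf_mult_right:
  assumes "M \<in> carrier_mat m m" "C \<in> carrier_mat m m"
  shows "qf m (M * C) f g = qf m M f (mv m C g)"
proof -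
  have "qf m (M * C) f g = (\<Sum>i<m. \<Sum>j<m. \<Sum>l<m. cnj (f i) * M $$ (i, l) * C $$ (l, j) * g j)"
    unfolding qf_def using assms
    by (intro sum.cong refl) (simp add: scalar_prod_def lessThan_atLeast0 sum_distrib_left sum_distrib_right mult.assoc)
  also have "\<dots> = (\<Sum>i<m. \<Sum>l<m. \<Sum>j<m. cnj (f i) * M $$ (i, l) * C $$ (l, j) * g j)"
    by (rule sum.cong[OF refl], rule sum.swap)
  also have "\<dots> = qf m M f (mv m C g)"
    unfolding qf_def mv_def by (simp add: sum_distrib_left mult.assoc)
  finally show ?thesis .
qed

lemma hermD: "herm m C \<Longrightarrow> i < m \<Longrightarrow> j < m \<Longrightarrow> cnj (C $$ (i, j)) = C $$ (j, i)"
  unfolding herm_def by metis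

lemma qf_mult_left:
  assumes "M \<in> carrier_mat m m" "C \<in> carrier_mat m m" "herm m C"
  shows "qf m (C * M) f g = qf m M (mv m C f) g"
proof -
  have "qf m (C * M) f g = (\<Sum>i<m. \<Sum>j<m. \<Sum>k<m. cnj (f i) * C $$ (i, k) * M $$ (k, j) * g j)"
    unfolding qf_def using assms
    by (intro sum.cong refl) (simp add: scalar_prod_def lessThan_atLeast0 sum_distrib_left sum_distrib_right mult.assoc)
  also have "\<dots> = (\<Sum>i<m. \<Sum>k<m. \<Sum>j<m. cnj (f i) * C $$ (i, k) * M $$ (k, j) * g j)"
    by (rule sum.cong[OF refl], rule sum.swap)
  also have "\<dots> = (\<Sum>k<m. \<Sum>i<m. \<Sum>j<m. cnj (f i) * C $$ (i, k) * M $$ (k, j) * g j)"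
    by (rule sum.swap)
  also have "\<dots> = (\<Sum>k<m. \<Sum>i<m. \<Sum>j<m. cnj (C $$ (k, i) * f i) * M $$ (k, j) * g j)"
  proof -
    have h: "cnj (C $$ (k, i) * f i) = cnj (f i) * C $$ (i, k)" if "i < m" "k < m" for i k
      using hermD[OF assms(3) that(2,1)] by simp
    show ?thesis by (intro sum.cong refl) (simp only: h lessThan_iff)
  qed
  also have "\<dots> = qf m M (mv m C f) g"
    unfolding qf_def mv_def
  proof (rule sum.cong[OF refl])
    fix k
    have "(\<Sum>j<m. cnj (\<Sum>i<m. C $$ (k, i) * f i) * M $$ (k, j) * g j)
        = (\<Sum>j<m. \<Sum>i<m. cnj (C $$ (k, i) * f i) * M $$ (k, j) * g j)"
      by (simp only: cnj_sum sum_distrib_right)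
    also have "\<dots> = (\<Sum>i<m. \<Sum>j<m. cnj (C $$ (k, i) * f i) * M $$ (k, j) * g j)"
      by (rule sum.swap)
    finally show "(\<Sum>i<m. \<Sum>j<m. cnj (C $$ (k, i) * f i) * M $$ (k, j) * g j)
        = (\<Sum>j<m. cnj (\<Sum>i<m. C $$ (k, i) * f i) * M $$ (k, j) * g j)" by (rule sym)
  qed
  finally show ?thesis .
qed


lemma psd_sandwich:
  assumes "psd m X" "C \<in> carrier_mat m m" "herm m C"
  shows "psd m (C * X * C)"
proof -
  have X: "X \<in> carrier_mat m m" using assms(1) psd_def by auto
  have CX: "C * X \<in> carrier_mat m m" using X assms(2) by simp
  have "qf m (C * X * C) f f = qf m X (mv m C f) (mv m C f)" for f
    using qf_mult_right[OF CX assms(2)] qf_mult_left[OF X assms(2,3)] by simp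
  moreover have "C * X * C \<in> carrier_mat m m" using CX assms(2) by simp
  ultimately show ?thesis using assms(1) unfolding psd_iff by metis
qed

lemma sum_blk:
  fixes p r n :: nat
  assumes "p < r"
  shows "(\<Sum>k<r * n. if k div n = p then F k else 0) = (\<Sum>a<n. F (p * n + a))"
proof -
  have "(\<Sum>k<r * n. if k div n = p then F k else 0) = (\<Sum>k\<in>{k\<in>{..<r * n}. k div n = p}. F k)"
    by (rule sum.inter_filter[symmetric]) simp
  also have "{k\<in>{..<r * n}. k div n = p} = (\<lambda>a. p * n + a) ` {..<n}"
  proof -
    have "k \<in> (\<lambda>a. p * n + a) ` {..<n}" if k: "k < r * n" "k div n = p" for k
    proof -
      have "n > 0" using k by (cases n) auto
      hence "k = p * n + k mod n" "k mod n < n" using k by (auto simp: mult.commute)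
      thus ?thesis by (metis image_eqI lessThan_iff)
    qed
    moreover have "k < r * n \<and> k div n = p" if "k \<in> (\<lambda>a. p * n + a) ` {..<n}" for k
      using that assms blk_bound divmod_blk by auto
    ultimately show ?thesis by blast
  qed
  also have "(\<Sum>k\<in>(\<lambda>a. p * n + a) ` {..<n}. F k) = (\<Sum>a<n. F (p * n + a))"
    by (rule sum.reindex_cong[where l="\<lambda>a. p * n + a"]) (auto simp: inj_on_def)
  finally show ?thesis .
qed

lemma mult3_entry:
  assumes "A \<in> carrier_mat m m'" "B \<in> carrier_mat m' p'" "C \<in> carrier_mat p' p" "i < m" "j < p"
  shows "(A * B * C) $$ (i, j) = (\<Sum>l<p'. (\<Sum>k<m'. A $$ (i, k) * B $$ (k, l)) * C $$ (l, j))"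
proof -
  have "(A * B * C) $$ (i, j) = (\<Sum>l<p'. (A * B) $$ (i, l) * C $$ (l, j))"
    by (rule mult_entry) (use assms in auto)
  also have "\<dots> = (\<Sum>l<p'. (\<Sum>k<m'. A $$ (i, k) * B $$ (k, l)) * C $$ (l, j))"
    using assms by (auto simp: scalar_prod_def lessThan_atLeast0 intro!: sum.cong)
  finally show ?thesis .
qed

definition bdiag :: "nat \<Rightarrow> nat \<Rightarrow> complex mat \<Rightarrow> complex mat" where
  "bdiag r n A = mat (r * n) (r * n) (\<lambda>(i, j). if i div n = j div n then A $$ (i mod n, j mod n) else 0)"

lemma bdiag_carrier[simp]: "bdiag r n A \<in> carrier_mat (r * n) (r * n)"
  by (simp add: bdiag_def)

lemma bdiag_herm: assumes "herm n A" shows "herm (r * n) (bdiag r n A)"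
  unfolding herm_def
proof (intro allI impI)
  fix i j assume ij: "i < r * n" "j < r * n"
  hence "n > 0" by (cases n) auto
  hence "i mod n < n" "j mod n < n" by auto
  thus "bdiag r n A $$ (j, i) = cnj (bdiag r n A $$ (i, j))"
    using ij hermD[OF assms] by (auto simp: bdiag_def)
qed

lemma ampl_lueders:
  assumes A: "A \<in> carrier_mat n n" and X: "X \<in> carrier_mat (r * n) (r * n)"
  shows "ampl r n n (\<lambda>\<rho>. A * \<rho> * A) X = bdiag r n A * X * bdiag r n A"
proof (rule eq_matI)
  fix i j assume "i < dim_row (bdiag r n A * X * bdiag r n A)" "j < dim_col (bdiag r n A * X * bdiag r n A)"
  hence ij: "i < r * n" "j < r * n" by (simp_all add: bdiag_def)
  hence n0: "n > 0" by (cases n) auto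
  define p where "p = i div n"
  define q where "q = j div n"
  define s where "s = i mod n"
  define t where "t = j mod n"
  have pq: "p < r" "q < r" using ij by (simp_all add: p_def q_def div_bound)
  have st: "s < n" "t < n" using n0 by (simp_all add: s_def t_def)
  define blk where "blk = mat n n (\<lambda>(a, b). X $$ (p * n + a, q * n + b))"
  have blkc: "blk \<in> carrier_mat n n" by (simp add: blk_def)
  have lhs: "ampl r n n (\<lambda>\<rho>. A * \<rho> * A) X $$ (i, j) = (A * blk * A) $$ (s, t)"
    using ij by (simp add: ampl_def blk_def p_def q_def s_def t_def)
  also have "\<dots> = (\<Sum>b<n. (\<Sum>a<n. A $$ (s, a) * blk $$ (a, b)) * A $$ (b, t))"
    by (rule mult3_entry[OF A blkc A st])
  also have "\<dots> = (\<Sum>b<n. (\<Sum>a<n. A $$ (s, a) * X $$ (p * n + a, q * n + b)) * A $$ (b, t))"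
    by (intro sum.cong refl) (simp add: blk_def)
  finally have L: "ampl r n n (\<lambda>\<rho>. A * \<rho> * A) X $$ (i, j) =
     (\<Sum>b<n. (\<Sum>a<n. A $$ (s, a) * X $$ (p * n + a, q * n + b)) * A $$ (b, t))" .
  let ?D = "bdiag r n A"
  have inner: "(\<Sum>k<r * n. ?D $$ (i, k) * X $$ (k, l)) = (\<Sum>a<n. A $$ (s, a) * X $$ (p * n + a, l))" for l
  proof -
    have "(\<Sum>k<r * n. ?D $$ (i, k) * X $$ (k, l)) = (\<Sum>k<r * n. if k div n = p then A $$ (s, k mod n) * X $$ (k, l) else 0)"
      using ij by (intro sum.cong refl) (auto simp: bdiag_def p_def s_def)
    also have "\<dots> = (\<Sum>a<n. A $$ (s, a) * X $$ (p * n + a, l))"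
      using sum_blk[OF pq(1), of n "\<lambda>k. A $$ (s, k mod n) * X $$ (k, l)"] by (simp add: divmod_blk)
    finally show ?thesis .
  qed
  have "(?D * X * ?D) $$ (i, j) = (\<Sum>l<r * n. (\<Sum>k<r * n. ?D $$ (i, k) * X $$ (k, l)) * ?D $$ (l, j))"
    using ij X by (intro mult3_entry) auto
  also have "\<dots> = (\<Sum>l<r * n. (\<Sum>a<n. A $$ (s, a) * X $$ (p * n + a, l)) * ?D $$ (l, j))"
    by (simp add: inner)
  also have "\<dots> = (\<Sum>l<r * n. if l div n = q then (\<Sum>a<n. A $$ (s, a) * X $$ (p * n + a, l)) * A $$ (l mod n, t) else 0)"
    using ij by (intro sum.cong refl) (auto simp: bdiag_def q_def t_def)
  also have "\<dots> = (\<Sum>b<n. (\<Sum>a<n. A $$ (s, a) * X $$ (p * n + a, q * n + b)) * A $$ (b, t))"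
    using sum_blk[OF pq(2), of n "\<lambda>l. (\<Sum>a<n. A $$ (s, a) * X $$ (p * n + a, l)) * A $$ (l mod n, t)"]
    by (simp add: divmod_blk)
  finally show "ampl r n n (\<lambda>\<rho>. A * \<rho> * A) X $$ (i, j) = (?D * X * ?D) $$ (i, j)" using L by simp
qed (simp_all add: bdiag_def)

lemma lueders_trace:
  assumes "A \<in> carrier_mat n n" "A * A = A" "\<rho> \<in> carrier_mat n n"
  shows "mtrace (A * \<rho> * A) = mtrace (A * \<rho>)"
proof -
  have "mtrace (A * \<rho> * A) = mtrace (A * (A * \<rho>))"
    using assms by (intro mtrace_comm[where n=n and m=n]) auto
  also have "A * (A * \<rho>) = A * A * \<rho>" using assms by (simp add: assoc_mult_mat[symmetric, of A n n A n \<rho> n])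
  finally show ?thesis using assms(2) by simp
qed

lemma povmD:
  assumes "is_povm n A"
  shows "psd n (A x)" "A x \<in> carrier_mat n n" "herm n (A x)" "msum n n A UNIV = 1\<^sub>m n"
  using assms psd_herm unfolding is_povm_def psd_def by auto

lemma povm_trace_sum:
  fixes A :: "'x::finite \<Rightarrow> complex mat"
  assumes "is_povm n A" "\<rho> \<in> carrier_mat n n"
  shows "(\<Sum>x\<in>UNIV. mtrace (A x * \<rho>)) = mtrace \<rho>"
proof -
  have "(\<Sum>x\<in>UNIV. mtrace (A x * \<rho>)) = mtrace (msum n n A UNIV * \<rho>)"
    using povmD(2)[OF assms(1)] assms(2) by (intro msum_mult_trace[symmetric]) auto
  thus ?thesis using povmD(4)[OF assms(1)] assms(2) by simp
qed

lemma lueders_instr: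
  fixes A :: "'x::finite \<Rightarrow> complex mat"
  assumes P: "is_povm n A" and S: "sharp n A"
  shows "is_instrument n n (\<lambda>x \<rho>. A x * \<rho> * A x)" "induced_povm n (\<lambda>x \<rho>. A x * \<rho> * A x) A"
proof -
  note Ac = povmD(2)[OF P] and Ah = povmD(3)[OF P] and Ap = povmD(1)[OF P]
  have idem: "A x * A x = A x" for x using S unfolding sharp_def by blast
  have tr: "mtrace (A x * \<rho> * A x) = mtrace (A x * \<rho>)" if "\<rho> \<in> carrier_mat n n" for x \<rho>
    using lueders_trace[OF Ac idem that] .
  have lin: "lin_map n n (\<lambda>\<rho>. A x * \<rho> * A x)" for x
    unfolding lin_map_def
  proof (intro conjI ballI allI)
    fix \<rho> :: "complex mat" assume "\<rho> \<in> carrier_mat n n"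
    thus "A x * \<rho> * A x \<in> carrier_mat n n" using Ac[of x] by auto
  next
    fix \<rho> \<sigma> :: "complex mat" assume r: "\<rho> \<in> carrier_mat n n" "\<sigma> \<in> carrier_mat n n"
    show "A x * (\<rho> + \<sigma>) * A x = A x * \<rho> * A x + A x * \<sigma> * A x"
    proof -
      have e1: "A x * (\<rho> + \<sigma>) = A x * \<rho> + A x * \<sigma>" by (rule mult_add_distrib_mat[OF Ac r])
      have e2: "(A x * \<rho> + A x * \<sigma>) * A x = A x * \<rho> * A x + A x * \<sigma> * A x"
        by (rule add_mult_distrib_mat[of _ n n]) (use r Ac[of x] in auto)
      show ?thesis unfolding e1 e2 ..
    qed
  next
    fix \<rho> :: "complex mat" and c assume r: "\<rho> \<in> carrier_mat n n"
    show "A x * (c \<cdot>\<^sub>m \<rho>) * A x = c \<cdot>\<^sub>m (A x * \<rho> * A x)"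
    proof -
      have e1: "A x * (c \<cdot>\<^sub>m \<rho>) = c \<cdot>\<^sub>m (A x * \<rho>)" by (rule mult_smult_distrib[OF Ac r])
      have e2: "(c \<cdot>\<^sub>m (A x * \<rho>)) * A x = c \<cdot>\<^sub>m (A x * \<rho> * A x)"
        by (rule mult_smult_assoc_mat[of _ n n]) (use r Ac[of x] in auto)
      show ?thesis unfolding e1 e2 ..
    qed
  qed
  show "is_instrument n n (\<lambda>x \<rho>. A x * \<rho> * A x)"
    unfolding is_instrument_def
  proof (intro conjI allI)
    fix x
    show "lin_map n n (\<lambda>\<rho>. A x * \<rho> * A x)" using lin .
    show "completely_positive n n (\<lambda>\<rho>. A x * \<rho> * A x)"
      unfolding completely_positive_def
    proof (intro allI impI)
      fix r X assume X: "psd (r * n) X"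
      hence Xc: "X \<in> carrier_mat (r * n) (r * n)" using psd_def by auto
      show "psd (r * n) (ampl r n n (\<lambda>\<rho>. A x * \<rho> * A x) X)"
        unfolding ampl_lueders[OF Ac Xc] using psd_sandwich[OF X bdiag_carrier bdiag_herm[OF Ah]] .
    qed
    show "trace_nonincreasing n (\<lambda>\<rho>. A x * \<rho> * A x)"
      unfolding trace_nonincreasing_def
    proof (intro allI impI)
      fix \<rho> assume r: "psd n \<rho>"
      hence rc: "\<rho> \<in> carrier_mat n n" using psd_def by auto
      have nn: "0 \<le> Re (mtrace (A z * \<rho>))" for z
        using psd_trace[OF psd_sandwich[OF r Ac Ah]] tr[OF rc] by simp
      have "Re (mtrace (A x * \<rho> * A x)) = Re (mtrace (A x * \<rho>))" using tr[OF rc] by simp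
      also have "\<dots> \<le> (\<Sum>z\<in>UNIV. Re (mtrace (A z * \<rho>)))"
        by (rule member_le_sum) (use nn in auto)
      also have "\<dots> = Re (mtrace \<rho>)" using povm_trace_sum[OF P rc] by (metis Re_sum)
      finally show "Re (mtrace (A x * \<rho> * A x)) \<le> Re (mtrace \<rho>)" .
    qed
  next
    show "trace_preserving n (chan n (\<lambda>x \<rho>. A x * \<rho> * A x))"
      unfolding trace_preserving_def
    proof
      fix \<rho> :: "complex mat" assume rc: "\<rho> \<in> carrier_mat n n"
      have "mtrace (chan n (\<lambda>x \<rho>. A x * \<rho> * A x) \<rho>) = (\<Sum>x\<in>UNIV. mtrace (A x * \<rho> * A x))"
      proof -
        have "A x * \<rho> * A x \<in> carrier_mat n n" for x using Ac[of x] rc by auto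
        thus ?thesis unfolding chan_def by (intro mtrace_msum) auto
      qed
      also have "\<dots> = (\<Sum>x\<in>UNIV. mtrace (A x * \<rho>))" using tr[OF rc] by simp
      also have "\<dots> = mtrace \<rho>" using povm_trace_sum[OF P rc] .
      finally show "mtrace (chan n (\<lambda>x \<rho>. A x * \<rho> * A x) \<rho>) = mtrace \<rho>" .
    qed
  qed
  show "induced_povm n (\<lambda>x \<rho>. A x * \<rho> * A x) A"
    unfolding induced_povm_def using Ac tr by simp
qed

lemma herm_prod:
  assumes "herm n X" "herm n Y" "X \<in> carrier_mat n n" "Y \<in> carrier_mat n n" "j < n" "k < n"
  shows "(X * Y) $$ (j, k) = cnj ((Y * X) $$ (k, j))"
proof -
  have "(X * Y) $$ (j, k) = (\<Sum>l<n. X $$ (j, l) * Y $$ (l, k))" by (rule mult_entry) (use assms in auto)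
  also have "\<dots> = (\<Sum>l<n. cnj (Y $$ (k, l) * X $$ (l, j)))"
    using hermD[OF assms(1)] hermD[OF assms(2)] assms(5,6) by (intro sum.cong refl) (simp add: mult.commute)
  also have "\<dots> = cnj (\<Sum>l<n. Y $$ (k, l) * X $$ (l, j))" by (simp only: cnj_sum)
  also have "(\<Sum>l<n. Y $$ (k, l) * X $$ (l, j)) = (Y * X) $$ (k, j)" by (rule mult_entry[symmetric]) (use assms in auto)
  finally show ?thesis .
qed

lemma sum_sq_zero:
  fixes w :: "nat \<Rightarrow> complex"
  assumes "(\<Sum>k<n. cnj (w k) * w k) = 0" "k < n"
  shows "w k = 0"
proof -
  have e: "cnj (w k) * w k = complex_of_real ((Re (w k))\<^sup>2 + (Im (w k))\<^sup>2)" for k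
    by (simp add: complex_eq_iff power2_eq_square)
  have "complex_of_real (\<Sum>k<n. (Re (w k))\<^sup>2 + (Im (w k))\<^sup>2) = 0"
    using assms(1) unfolding e of_real_sum .
  hence "(\<Sum>k<n. (Re (w k))\<^sup>2 + (Im (w k))\<^sup>2) = 0" by (simp only: of_real_eq_0_iff)
  hence "\<forall>k\<in>{..<n}. (Re (w k))\<^sup>2 + (Im (w k))\<^sup>2 = 0"
    by (subst sum_nonneg_eq_0_iff[symmetric]) auto
  hence "(Re (w k))\<^sup>2 + (Im (w k))\<^sup>2 = 0" using assms(2) by auto
  hence "Re (w k) = 0" "Im (w k) = 0" by (simp_all add: sum_power2_eq_zero_iff)
  thus ?thesis by (simp add: complex_eq_iff)
qed

lemma povm_orth:
  fixes A :: "'x::finite \<Rightarrow> complex mat"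
  assumes P: "is_povm n A" and S: "sharp n A" and xz: "x \<noteq> z"
  shows "A x * A z = 0\<^sub>m n n"
proof -
  note Ac = povmD(2)[OF P] and Ah = povmD(3)[OF P] and Ap = povmD(1)[OF P]
  have idem: "A w * A w = A w" for w using S unfolding sharp_def by blast
  let ?P = "A x"
  have sw: "psd n (?P * A w * ?P)" for w using psd_sandwich[OF Ap Ac Ah] .
  have "?P * msum n n A UNIV * ?P = msum n n (\<lambda>w. ?P * A w * ?P) UNIV"
    using Ac by (intro mult_msum) auto
  moreover have "?P * msum n n A UNIV * ?P = ?P"
    using povmD(4)[OF P] Ac[of x] idem[of x] by simp
  moreover have "\<forall>w\<in>UNIV. ?P * A w * ?P \<in> carrier_mat n n" using sw psd_def by blast
  ultimately have "mtrace ?P = (\<Sum>w\<in>UNIV. mtrace (?P * A w * ?P))"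
    using mtrace_msum[where k=n and f="\<lambda>w. ?P * A w * ?P" and S=UNIV] by simp
  also have "\<dots> = mtrace (?P * A x * ?P) + (\<Sum>w\<in>UNIV - {x}. mtrace (?P * A w * ?P))"
    by (simp add: sum.remove)
  also have "?P * A x * ?P = ?P" using idem[of x] by simp
  finally have s0: "(\<Sum>w\<in>UNIV - {x}. mtrace (?P * A w * ?P)) = 0" by simp
  hence "(\<Sum>w\<in>UNIV - {x}. Re (mtrace (?P * A w * ?P))) = 0" by (metis Re_sum zero_complex.simps(1))
  hence "\<forall>w\<in>UNIV - {x}. Re (mtrace (?P * A w * ?P)) = 0"
    using psd_trace[OF sw] by (subst sum_nonneg_eq_0_iff[symmetric]) auto
  hence "Re (mtrace (?P * A z * ?P)) = 0" using xz by auto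
  hence "mtrace (?P * A z * ?P) = 0" using psd_trace[OF sw[of z]] by (simp add: complex_eq_iff)
  hence PZP: "?P * A z * ?P = 0\<^sub>m n n" using psd_trace_zero[OF sw[of z]] by simp
  have ZP: "(A z * ?P) $$ (k, j) = 0" if jk: "j < n" "k < n" for j k
  proof -
    have "?P * A z * ?P = (?P * A z) * (A z * ?P)"
    proof -
      have "A z * (A z * ?P) = A z * ?P"
        using assoc_mult_mat[OF Ac[of z] Ac[of z] Ac[of x], symmetric] idem[of z] by simp
      moreover have "?P * A z * (A z * ?P) = ?P * (A z * (A z * ?P))"
        by (rule assoc_mult_mat[OF Ac[of x] Ac[of z] mult_carrier_mat[OF Ac[of z] Ac[of x]]])
      moreover have "?P * A z * ?P = ?P * (A z * ?P)"
        by (rule assoc_mult_mat[OF Ac[of x] Ac[of z] Ac[of x]])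
      ultimately show ?thesis by simp
    qed
    hence "(?P * A z) * (A z * ?P) = 0\<^sub>m n n" using PZP by simp
    hence "0 = ((?P * A z) * (A z * ?P)) $$ (j, j)" using jk by simp
    also have "\<dots> = (\<Sum>l<n. (?P * A z) $$ (j, l) * (A z * ?P) $$ (l, j))"
      using jk Ac[of x] Ac[of z] by (intro mult_entry) auto
    also have "\<dots> = (\<Sum>l<n. cnj ((A z * ?P) $$ (l, j)) * (A z * ?P) $$ (l, j))"
    proof (rule sum.cong[OF refl])
      fix l assume "l \<in> {..<n}"
      hence "(?P * A z) $$ (j, l) = cnj ((A z * ?P) $$ (l, j))"
        using herm_prod[OF Ah[of x] Ah[of z] Ac[of x] Ac[of z], of j l] jk by simp
      thus "(?P * A z) $$ (j, l) * (A z * ?P) $$ (l, j) = cnj ((A z * ?P) $$ (l, j)) * (A z * ?P) $$ (l, j)"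
        by (rule arg_cong[where f="\<lambda>u. u * _"])
    qed
    finally show ?thesis using sum_sq_zero[of "\<lambda>l. (A z * ?P) $$ (l, j)" n k] jk by simp
  qed
  show ?thesis
  proof (rule eq_matI)
    fix j k assume "j < dim_row (0\<^sub>m n n :: complex mat)" "k < dim_col (0\<^sub>m n n :: complex mat)"
    hence jk: "j < n" "k < n" by auto
    show "(?P * A z) $$ (j, k) = 0\<^sub>m n n $$ (j, k)"
    proof -
      have "(?P * A z) $$ (j, k) = cnj ((A z * ?P) $$ (k, j))"
        using herm_prod[OF Ah[of x] Ah[of z] Ac[of x] Ac[of z] jk] .
      thus ?thesis using ZP[OF jk] jk by simp
    qed
  qed (use Ac[of x] Ac[of z] in auto)
qed

lemma rk_psd: "psd n (rk n u u)"
proof -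
  have "qf n (rk n u u) f f = (\<Sum>i<n. cnj (f i) * u i) * cnj (\<Sum>i<n. cnj (f i) * u i)" for f
    unfolding qf_def rk_def
    by (simp add: cnj_sum sum_distrib_left sum_distrib_right mult.assoc mult.left_commute mult.commute)
  moreover have nn: "Im (c * cnj c) = 0 \<and> 0 \<le> Re (c * cnj c)" for c :: complex
    by simp
  ultimately have "Im (qf n (rk n u u) f f) = 0 \<and> 0 \<le> Re (qf n (rk n u u) f f)" for f
    by presburger
  thus ?thesis by (simp add: psd_iff)
qed

lemma qf_add_mat: "A \<in> carrier_mat n n \<Longrightarrow> B \<in> carrier_mat n n \<Longrightarrow> qf n (A + B) f g = qf n A f g + qf n B f g"
  by (simp add: qf_def algebra_simps sum.distrib)

lemma qf_smult_mat: "A \<in> carrier_mat n n \<Longrightarrow> qf n (c \<cdot>\<^sub>m A) f g = c * qf n A f g"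
  by (simp add: qf_def algebra_simps sum_distrib_left)

lemma rk_expand:
  "rk n (\<lambda>i. a i + t * b i) (\<lambda>i. a i + t * b i) =
     rk n a a + cnj t \<cdot>\<^sub>m rk n a b + t \<cdot>\<^sub>m rk n b a + (t * cnj t) \<cdot>\<^sub>m rk n b b"
  by (rule eq_matI) (auto simp: rk_def algebra_simps)

lemma lin_sandwich: assumes "C \<in> carrier_mat n n" shows "lin_map n n (\<lambda>\<rho>. C * \<rho> * C)"
  unfolding lin_map_def
proof (intro conjI ballI allI)
  fix \<rho> :: "complex mat" assume "\<rho> \<in> carrier_mat n n"
  thus "C * \<rho> * C \<in> carrier_mat n n" using assms by auto
next
  fix \<rho> \<sigma> :: "complex mat" assume r: "\<rho> \<in> carrier_mat n n" "\<sigma> \<in> carrier_mat n n"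
  have e1: "C * (\<rho> + \<sigma>) = C * \<rho> + C * \<sigma>" by (rule mult_add_distrib_mat[OF assms r])
  have e2: "(C * \<rho> + C * \<sigma>) * C = C * \<rho> * C + C * \<sigma> * C"
    by (rule add_mult_distrib_mat[of _ n n]) (use r assms in auto)
  show "C * (\<rho> + \<sigma>) * C = C * \<rho> * C + C * \<sigma> * C" unfolding e1 e2 ..
next
  fix \<rho> :: "complex mat" and c assume r: "\<rho> \<in> carrier_mat n n"
  have e1: "C * (c \<cdot>\<^sub>m \<rho>) = c \<cdot>\<^sub>m (C * \<rho>)" by (rule mult_smult_distrib[OF assms r])
  have e2: "(c \<cdot>\<^sub>m (C * \<rho>)) * C = c \<cdot>\<^sub>m (C * \<rho> * C)"
    by (rule mult_smult_assoc_mat[of _ n n]) (use r assms in auto)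
  show "C * (c \<cdot>\<^sub>m \<rho>) * C = c \<cdot>\<^sub>m (C * \<rho> * C)" unfolding e1 e2 ..
qed

lemma lin_map_diff:
  assumes "lin_map n k F1" "lin_map n k F2"
  shows "lin_map n k (\<lambda>\<rho>. F1 \<rho> - F2 \<rho>)"
  unfolding lin_map_def
proof (intro conjI ballI allI)
  fix A :: "complex mat" assume "A \<in> carrier_mat n n"
  thus "F1 A - F2 A \<in> carrier_mat k k" using lin_mapD(1)[OF assms(2)] minus_carrier_mat by blast
next
  fix A B :: "complex mat" assume r: "A \<in> carrier_mat n n" "B \<in> carrier_mat n n"
  have c: "F1 A \<in> carrier_mat k k" "F1 B \<in> carrier_mat k k" "F2 A \<in> carrier_mat k k" "F2 B \<in> carrier_mat k k"
    using lin_mapD(1)[OF assms(1)] lin_mapD(1)[OF assms(2)] r by auto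
  show "F1 (A + B) - F2 (A + B) = F1 A - F2 A + (F1 B - F2 B)"
    using lin_mapD(2)[OF assms(1) r] lin_mapD(2)[OF assms(2) r] c[THEN carrier_matD(1)] c[THEN carrier_matD(2)]
    by (intro eq_matI) (auto simp: algebra_simps)
next
  fix A :: "complex mat" and c assume r: "A \<in> carrier_mat n n"
  have cc: "F1 A \<in> carrier_mat k k" "F2 A \<in> carrier_mat k k"
    using lin_mapD(1)[OF assms(1)] lin_mapD(1)[OF assms(2)] r by auto
  show "F1 (c \<cdot>\<^sub>m A) - F2 (c \<cdot>\<^sub>m A) = c \<cdot>\<^sub>m (F1 A - F2 A)"
    using lin_mapD(3)[OF assms(1) r] lin_mapD(3)[OF assms(2) r] cc[THEN carrier_matD(1)] cc[THEN carrier_matD(2)]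
    by (intro eq_matI) (auto simp: algebra_simps)
qed

lemma key_lemma:
  assumes L: "lin_map n d \<Phi>" and CP: "completely_positive n d \<Phi>"
    and Pc: "P \<in> carrier_mat n n" and Ph: "herm n P" and Pi: "P * P = P"
    and dom: "\<forall>\<sigma>. psd n \<sigma> \<longrightarrow> Re (mtrace (\<Phi> \<sigma>)) \<le> Re (mtrace (P * \<sigma>))"
    and rc: "\<rho> \<in> carrier_mat n n"
  shows "\<Phi> \<rho> = \<Phi> (P * \<rho> * P)"
proof -
  have pos: "psd d (\<Phi> \<sigma>)" if "psd n \<sigma>" for \<sigma> using cp_pos[OF CP L that] .
  note Lc = lin_mapD(1)[OF L] and La = lin_mapD(2)[OF L] and Ls = lin_mapD(3)[OF L]
  define ker where "ker b \<longleftrightarrow> (\<forall>i<n. (\<Sum>k<n. P $$ (i, k) * b k) = 0)" for b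
  have k1: "\<Phi> (rk n b b) = 0\<^sub>m d d" if kb: "ker b" for b
  proof -
    have "mtrace (P * rk n b b) = (\<Sum>i<n. \<Sum>k<n. P $$ (i, k) * (b k * cnj (b i)))"
      unfolding mtrace_def using Pc by (auto simp: scalar_prod_def lessThan_atLeast0 rk_def intro!: sum.cong)
    also have "\<dots> = (\<Sum>i<n. cnj (b i) * (\<Sum>k<n. P $$ (i, k) * b k))"
      by (simp add: sum_distrib_left algebra_simps)
    also have "\<dots> = 0" using kb unfolding ker_def by simp
    finally have "mtrace (P * rk n b b) = 0" .
    hence "Re (mtrace (\<Phi> (rk n b b))) \<le> 0" using dom rk_psd by (metis zero_complex.simps(1))
    moreover have "Im (mtrace (\<Phi> (rk n b b))) = 0 \<and> 0 \<le> Re (mtrace (\<Phi> (rk n b b)))"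
      using psd_trace[OF pos[OF rk_psd]] .
    ultimately have "mtrace (\<Phi> (rk n b b)) = 0" by (simp add: complex_eq_iff)
    thus ?thesis using psd_trace_zero[OF pos[OF rk_psd]] by simp
  qed
  have k2: "\<Phi> (rk n a b) = 0\<^sub>m d d \<and> \<Phi> (rk n b a) = 0\<^sub>m d d" if kb: "ker b" for a b
  proof -
    have c: "\<Phi> (rk n a a) \<in> carrier_mat d d" "\<Phi> (rk n a b) \<in> carrier_mat d d"
      "\<Phi> (rk n b a) \<in> carrier_mat d d" "\<Phi> (rk n b b) \<in> carrier_mat d d"
      using Lc by auto
    have exp: "\<Phi> (rk n (\<lambda>i. a i + t * b i) (\<lambda>i. a i + t * b i)) =
       \<Phi> (rk n a a) + cnj t \<cdot>\<^sub>m \<Phi> (rk n a b) + t \<cdot>\<^sub>m \<Phi> (rk n b a) + (t * cnj t) \<cdot>\<^sub>m \<Phi> (rk n b b)" for t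
      unfolding rk_expand by (simp add: La Ls)
    have "qf d (\<Phi> (rk n a b)) f f = 0 \<and> qf d (\<Phi> (rk n b a)) f f = 0" for f
    proof -
      have "\<forall>t. Im (qf d (\<Phi> (rk n a a)) f f + cnj t * qf d (\<Phi> (rk n a b)) f f + t * qf d (\<Phi> (rk n b a)) f f) = 0 \<and>
             0 \<le> Re (qf d (\<Phi> (rk n a a)) f f + cnj t * qf d (\<Phi> (rk n a b)) f f + t * qf d (\<Phi> (rk n b a)) f f)"
      proof
        fix t
        have "qf d (\<Phi> (rk n (\<lambda>i. a i + t * b i) (\<lambda>i. a i + t * b i))) f f =
            qf d (\<Phi> (rk n a a)) f f + cnj t * qf d (\<Phi> (rk n a b)) f f + t * qf d (\<Phi> (rk n b a)) f f"
        proof -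
          have e: "\<Phi> (rk n (\<lambda>i. a i + t * b i) (\<lambda>i. a i + t * b i)) =
             \<Phi> (rk n a a) + cnj t \<cdot>\<^sub>m \<Phi> (rk n a b) + t \<cdot>\<^sub>m \<Phi> (rk n b a)"
            unfolding exp k1[OF kb] using c by simp
          show ?thesis unfolding e using c
            by (simp add: qf_add_mat[where n=d] qf_smult_mat[where n=d])
        qed
        thus "Im (qf d (\<Phi> (rk n a a)) f f + cnj t * qf d (\<Phi> (rk n a b)) f f + t * qf d (\<Phi> (rk n b a)) f f) = 0 \<and>
             0 \<le> Re (qf d (\<Phi> (rk n a a)) f f + cnj t * qf d (\<Phi> (rk n a b)) f f + t * qf d (\<Phi> (rk n b a)) f f)"
          using pos[OF rk_psd] unfolding psd_iff by metis
      qed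
      thus ?thesis by (rule cplx_lemma)
    qed
    thus ?thesis using qf_zero_mat c by metis
  qed
  have bas: "\<Phi> (Em n a b) - \<Phi> (P * Em n a b * P) = 0\<^sub>m d d" if ab: "a < n" "b < n" for a b
  proof -
    define pa where "pa = (\<lambda>i. P $$ (i, a))"
    define pb where "pb = (\<lambda>i. P $$ (i, b))"
    define qa where "qa = (\<lambda>i. uv a i - P $$ (i, a))"
    define qb where "qb = (\<lambda>i. uv b i - P $$ (i, b))"
    have kerq: "ker qa" "ker qb"
    proof -
      have "ker (\<lambda>i. uv c i - P $$ (i, c))" if "c < n" for c
        unfolding ker_def
      proof (intro allI impI)
        fix i assume i: "i < n"
        have "(\<Sum>k<n. P $$ (i, k) * (uv c k - P $$ (k, c))) = (\<Sum>k<n. P $$ (i, k) * uv c k) - (\<Sum>k<n. P $$ (i, k) * P $$ (k, c))"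
          by (simp add: algebra_simps sum_subtractf)
        also have "(\<Sum>k<n. P $$ (i, k) * uv c k) = P $$ (i, c)" using that by (simp add: uv_def if_distrib sum.delta cong: if_cong)
        also have "(\<Sum>k<n. P $$ (i, k) * P $$ (k, c)) = (P * P) $$ (i, c)" by (rule mult_entry[symmetric, OF Pc Pc i that])
        finally show "(\<Sum>k<n. P $$ (i, k) * (uv c k - P $$ (k, c))) = 0" using Pi by simp
      qed
      thus "ker qa" "ker qb" using ab unfolding qa_def qb_def by auto
    qed
    have d1: "Em n a b = rk n pa pb + rk n qa (uv b) + rk n pa qb"
      by (rule eq_matI) (auto simp: Em_def rk_def pa_def pb_def qa_def qb_def algebra_simps)
    have d2: "P * Em n a b * P = rk n pa pb"
    proof (rule eq_matI)
      fix i j assume "i < dim_row (rk n pa pb)" "j < dim_col (rk n pa pb)"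
      hence ij: "i < n" "j < n" by auto
      have "(P * Em n a b * P) $$ (i, j) = (\<Sum>l<n. (\<Sum>k<n. P $$ (i, k) * Em n a b $$ (k, l)) * P $$ (l, j))"
        by (rule mult3_entry[OF Pc Em_carrier Pc ij])
      also have "\<dots> = (\<Sum>l<n. if l = b then P $$ (i, a) * P $$ (l, j) else 0)"
      proof (rule sum.cong[OF refl])
        fix l assume l: "l \<in> {..<n}"
        have "(\<Sum>k<n. P $$ (i, k) * Em n a b $$ (k, l)) = (\<Sum>k<n. if k = a then (if l = b then P $$ (i, k) else 0) else 0)"
          using l by (intro sum.cong refl) (auto simp: Em_index)
        also have "\<dots> = (if l = b then P $$ (i, a) else 0)" using ab by (simp add: sum.delta)
        finally show "(\<Sum>k<n. P $$ (i, k) * Em n a b $$ (k, l)) * P $$ (l, j) = (if l = b then P $$ (i, a) * P $$ (l, j) else 0)"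
          by simp
      qed
      also have "\<dots> = P $$ (i, a) * P $$ (b, j)" using ab by (simp add: sum.delta)
      also have "\<dots> = rk n pa pb $$ (i, j)" using ij ab hermD[OF Ph, of j b] by (simp add: rk_def pa_def pb_def)
      finally show "(P * Em n a b * P) $$ (i, j) = rk n pa pb $$ (i, j)" .
    qed (use Pc in auto)
    have "\<Phi> (Em n a b) = \<Phi> (rk n pa pb) + \<Phi> (rk n qa (uv b)) + \<Phi> (rk n pa qb)"
      unfolding d1 by (simp add: La)
    also have "\<dots> = \<Phi> (rk n pa pb)"
      using k2[OF kerq(1), of "uv b"] k2[OF kerq(2), of pa] Lc[of "rk n pa pb"] by simp
    finally show ?thesis unfolding d2 using Lc[of "rk n pa pb"] by simp
  qed
  have LP: "lin_map n d (\<lambda>\<rho>. \<Phi> \<rho> - \<Phi> (P * \<rho> * P))"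
    using lin_map_diff[OF L lin_map_comp[OF lin_sandwich[OF Pc] L]] .
  have f1: "\<forall>A\<in>carrier_mat n n. \<forall>B\<in>carrier_mat n n. (\<lambda>\<rho>. \<Phi> \<rho> - \<Phi> (P * \<rho> * P)) (A + B)
     = (\<lambda>\<rho>. \<Phi> \<rho> - \<Phi> (P * \<rho> * P)) A + (\<lambda>\<rho>. \<Phi> \<rho> - \<Phi> (P * \<rho> * P)) B"
    using lin_mapD(2)[OF LP] by blast
  have f2: "\<forall>A\<in>carrier_mat n n. \<forall>c. (\<lambda>\<rho>. \<Phi> \<rho> - \<Phi> (P * \<rho> * P)) (c \<cdot>\<^sub>m A)
     = c \<cdot>\<^sub>m (\<lambda>\<rho>. \<Phi> \<rho> - \<Phi> (P * \<rho> * P)) A"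
    using lin_mapD(3)[OF LP] by blast
  have f3: "\<forall>A\<in>carrier_mat n n. (\<lambda>\<rho>. \<Phi> \<rho> - \<Phi> (P * \<rho> * P)) A \<in> carrier_mat d d"
    using lin_mapD(1)[OF LP] by blast
  have f4: "\<forall>a<n. \<forall>b<n. (\<lambda>\<rho>. \<Phi> \<rho> - \<Phi> (P * \<rho> * P)) (Em n a b) = 0\<^sub>m d d"
    using bas by blast
  have z: "\<Phi> \<rho> - \<Phi> (P * \<rho> * P) = 0\<^sub>m d d"
    using basis_matrix[OF f1 f2 f3 f4 rc] by simp
  have c1: "\<Phi> \<rho> \<in> carrier_mat d d" "\<Phi> (P * \<rho> * P) \<in> carrier_mat d d"
    using Lc rc Pc by auto
  show ?thesis
  proof (rule eq_matI)
    fix i j assume "i < dim_row (\<Phi> (P * \<rho> * P))" "j < dim_col (\<Phi> (P * \<rho> * P))"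
    hence ij: "i < d" "j < d" using c1 by auto
    have "(\<Phi> \<rho> - \<Phi> (P * \<rho> * P)) $$ (i, j) = 0" using z ij by simp
    thus "\<Phi> \<rho> $$ (i, j) = \<Phi> (P * \<rho> * P) $$ (i, j)" using c1 ij by simp
  qed (use c1 in auto)
qed

lemma part2:
  fixes A :: "'x::finite \<Rightarrow> complex mat" and J :: "'y::finite \<Rightarrow> complex mat \<Rightarrow> complex mat"
  assumes P: "is_povm n A" and S: "sharp n A" and J: "is_instrument n d J" and C: "compatible n d A J"
  shows "povm_not_disturb n d A J"
proof -
  obtain G :: "'x \<times> 'y \<Rightarrow> complex mat \<Rightarrow> complex mat" and B :: "'x \<times> 'y \<Rightarrow> complex mat" where
    G: "is_instrument n d G" and GB: "induced_povm n G B"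
    and mJ: "\<forall>y. \<forall>\<rho>\<in>carrier_mat n n. msum d d (\<lambda>x. G (x, y) \<rho>) UNIV = J y \<rho>"
    and mA: "\<forall>x. msum n n (\<lambda>y. B (x, y)) UNIV = A x"
    using C unfolding compatible_def by blast
  note Ac = povmD(2)[OF P] and Ah = povmD(3)[OF P]
  have idem: "A x * A x = A x" for x using S unfolding sharp_def by blast
  have GL: "lin_map n d (G p)" for p using instrD(1)[OF G] .
  have Bc: "B p \<in> carrier_mat n n" for p using GB unfolding induced_povm_def by blast
  have Btr: "mtrace (B p * \<sigma>) = mtrace (G p \<sigma>)" if "\<sigma> \<in> carrier_mat n n" for p \<sigma>
    using GB that unfolding induced_povm_def by blast
  have K: "G (x, y) \<rho> = G (x, y) (A x * \<rho> * A x)" if rc: "\<rho> \<in> carrier_mat n n" for x y \<rho>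
  proof (rule key_lemma[OF GL instrD(2)[OF G] Ac Ah idem _ rc])
    show "\<forall>\<sigma>. psd n \<sigma> \<longrightarrow> Re (mtrace (G (x, y) \<sigma>)) \<le> Re (mtrace (A x * \<sigma>))"
    proof (intro allI impI)
      fix \<sigma> assume ps: "psd n \<sigma>"
      hence sc: "\<sigma> \<in> carrier_mat n n" using psd_def by auto
      have nn: "0 \<le> Re (mtrace (G (x, y') \<sigma>))" for y'
        using psd_trace[OF cp_pos[OF instrD(2)[OF G] GL ps]] by simp
      have "mtrace (A x * \<sigma>) = mtrace (msum n n (\<lambda>y. B (x, y)) UNIV * \<sigma>)" using mA by simp
      also have "\<dots> = (\<Sum>y'\<in>UNIV. mtrace (B (x, y') * \<sigma>))"
        using Bc sc by (intro msum_mult_trace) auto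
      also have "\<dots> = (\<Sum>y'\<in>UNIV. mtrace (G (x, y') \<sigma>))" using Btr[OF sc] by simp
      finally have "Re (mtrace (A x * \<sigma>)) = (\<Sum>y'\<in>UNIV. Re (mtrace (G (x, y') \<sigma>)))" by simp
      moreover have "Re (mtrace (G (x, y) \<sigma>)) \<le> (\<Sum>y'\<in>UNIV. Re (mtrace (G (x, y') \<sigma>)))"
        by (rule member_le_sum) (use nn in auto)
      ultimately show "Re (mtrace (G (x, y) \<sigma>)) \<le> Re (mtrace (A x * \<sigma>))" by simp
    qed
  qed
  define I :: "'x \<Rightarrow> complex mat \<Rightarrow> complex mat" where "I = (\<lambda>x \<rho>. A x * \<rho> * A x)"
  have Ic: "A x * \<rho> * A x \<in> carrier_mat n n" if "\<rho> \<in> carrier_mat n n" for x \<rho> using Ac[of x] that by auto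
  have proj: "A x * chan n I \<rho> * A x = A x * \<rho> * A x" if rc: "\<rho> \<in> carrier_mat n n" for x \<rho>
  proof -
    have "A x * chan n I \<rho> * A x = msum n n (\<lambda>x'. A x * (A x' * \<rho> * A x') * A x) UNIV"
      unfolding chan_def I_def using Ac Ic[OF rc] by (intro mult_msum) auto
    also have "\<dots> = msum n n (\<lambda>x'. if x' = x then A x * \<rho> * A x else 0\<^sub>m n n) UNIV"
    proof (rule msum_cong)
      fix x' :: 'x
      have e: "A x * (A x' * \<rho> * A x') * A x = (A x * A x') * \<rho> * (A x' * A x)"
      proof -
        have X: "A x \<in> carrier_mat n n" and Y: "A x' \<in> carrier_mat n n" using Ac by auto
        have YR: "A x' * \<rho> \<in> carrier_mat n n" using Y rc by auto
        have XYR: "A x * A x' * \<rho> \<in> carrier_mat n n" using X Y rc by auto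
        have s1: "A x * (A x' * \<rho> * A x') = A x * (A x' * \<rho>) * A x'"
          using assoc_mult_mat[OF X YR Y] by simp
        have s2: "A x * (A x' * \<rho>) = A x * A x' * \<rho>"
          using assoc_mult_mat[OF X Y rc] by simp
        have s3: "A x * A x' * \<rho> * A x' * A x = A x * A x' * \<rho> * (A x' * A x)"
          using assoc_mult_mat[OF XYR Y X] .
        show ?thesis by (simp only: s1 s2 s3)
      qed
      show "A x * (A x' * \<rho> * A x') * A x = (if x' = x then A x * \<rho> * A x else 0\<^sub>m n n)"
      proof (cases "x' = x")
        case True thus ?thesis unfolding e using idem by simp
      next
        case False
        have "A x * A x' = 0\<^sub>m n n" "A x' * A x = 0\<^sub>m n n" using povm_orth[OF P S] False by auto
        thus ?thesis unfolding e using False rc by simp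
      qed
    qed
    also have "\<dots> = A x * \<rho> * A x"
    proof (rule eq_matI)
      fix i j assume "i < dim_row (A x * \<rho> * A x)" "j < dim_col (A x * \<rho> * A x)"
      hence ij: "i < n" "j < n" using Ic[OF rc, of x] by auto
      have "msum n n (\<lambda>x'. if x' = x then A x * \<rho> * A x else 0\<^sub>m n n) UNIV $$ (i, j)
          = (\<Sum>x'\<in>UNIV. (if x' = x then A x * \<rho> * A x else 0\<^sub>m n n) $$ (i, j))"
        using ij by (simp add: msum_def)
      also have "\<dots> = (\<Sum>x'\<in>UNIV. if x' = x then (A x * \<rho> * A x) $$ (i, j) else 0)"
        by (rule sum.cong[OF refl]) (simp add: ij)
      also have "\<dots> = (A x * \<rho> * A x) $$ (i, j)" by simp
      finally show "msum n n (\<lambda>x'. if x' = x then A x * \<rho> * A x else 0\<^sub>m n n) UNIV $$ (i, j) = (A x * \<rho> * A x) $$ (i, j)" .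
    qed (use Ic[OF rc, of x] in auto)
    finally show ?thesis .
  qed
  have nd: "ins_not_disturb n d I J"
    unfolding ins_not_disturb_def
  proof (intro allI ballI)
    fix y and \<rho> :: "complex mat" assume rc: "\<rho> \<in> carrier_mat n n"
    have cc: "chan n I \<rho> \<in> carrier_mat n n" by (simp add: chan_def)
    have "J y (chan n I \<rho>) = msum d d (\<lambda>x. G (x, y) (chan n I \<rho>)) UNIV" using mJ cc by simp
    also have "\<dots> = msum d d (\<lambda>x. G (x, y) (A x * chan n I \<rho> * A x)) UNIV"
      using K[OF cc] by (intro msum_cong) auto
    also have "\<dots> = msum d d (\<lambda>x. G (x, y) (A x * \<rho> * A x)) UNIV"
      using proj[OF rc] by (intro msum_cong) auto
    also have "\<dots> = msum d d (\<lambda>x. G (x, y) \<rho>) UNIV"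
      using K[OF rc] by (intro msum_cong) auto
    also have "\<dots> = J y \<rho>" using mJ rc by simp
    finally show "J y (chan n I \<rho>) = J y \<rho>" .
  qed
  show ?thesis unfolding povm_not_disturb_def
    using lueders_instr[OF P S] nd unfolding I_def by blast
qed

theorem proposition4:
  fixes n d :: nat
    and A :: "'x::finite \<Rightarrow> complex mat"
    and J :: "'y::finite \<Rightarrow> complex mat \<Rightarrow> complex mat"
  assumes "is_povm n A" and "is_instrument n d J"
  shows "(povm_not_disturb n d A J \<longrightarrow> compatible n d A J)
       \<and> (sharp n A \<longrightarrow> compatible n d A J \<longrightarrow> povm_not_disturb n d A J)"
  using part1[OF assms(2)] part2[OF assms(1) _ assms(2)] by blast

end
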